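(* Let $\mathcal{F}=\langle\mathbb{A},(\mu_i)_{i\in\mathsf{Ag}}\rangle$ be an APE-structure and $\mathbb{E}=(E,(\sim_i),(P_i),\Phi,\mathsf{pre})$ a probabilistic event structure over $\mathbb{A}$. Then the updated structure $\mathcal{F}^{\mathbb{E}}=(\mathbb{A}^{\mathbb{E}},(\mu^{\mathbb{E}}_i)_{i\in\mathsf{Ag}})$ is an APE-structure.
   Context: Fix a set $\mathsf{Ag}$ of agents. A monadic Heyting algebra is a Heyting algebra $\mathbb{L}$ with, for each $i\in\mathsf{Ag}$, monotone unary operations $\lozenge_i,\Box_i$ such that for all $a,b$: $a\leq\lozenge_i a$; $\Box_i a\leq a$; $\lozenge_i(a\vee b)\leq\lozenge_i a\vee\lozenge_i b$; $\Box_i(a\to b)\leq\Box_i a\to\Box_i b$; $\lozenge_i a\leq\Box_i\lozenge_i a$; $\lozenge_i\Box_i a\leq\Box_i a$; $\Box_i(a\to b)\leq\lozenge_i a\to\lozenge_i b$; $\lozenge_i\bot\leq\bot$; $\top\leq\Box_i\top$. An epistemic Heyting algebra is a finite monadic Heyting algebra with $\lozenge_i a\vee\neg\lozenge_i a=\top$ for all $i,a$. An element $c$ is $i$-minimal if $c\neq\bot$, $\lozenge_i c=c$, and whenever $d<c$ and $\lozenge_i d=d$ then $d=\bot$; $\mathsf{Min}_i(\cdot)$ is the set of $i$-minimal elements. A partial map $\mu:\mathbb{A}\to\mathbb{R}^+$ is an $i$-premeasure if: $\mathsf{dom}(\mu)=\mathsf{Min}_i(\mathbb{A}){\downarrow}$;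 $\mu$ is order-preserving; for $a\in\mathsf{Min}_i(\mathbb{A})$ and $b,c\leq a$, $\mu(b\vee c)=\mu(b)+\mu(c)-\mu(b\wedge c)$; $\mu(\bot)=0$ if $\mathsf{dom}(\mu)\neq\varnothing$. It is an $i$-measure if also: for $a\in\mathsf{Min}_i(\mathbb{A})$ and $b<c\leq a$, $\mu(b)<\mu(c)$; and $\mu(a)=1$ for $a\in\mathsf{Min}_i(\mathbb{A})$. An APE-structure is $\langle\mathbb{A},(\mu_i)\rangle$ with $\mathbb{A}$ an epistemic Heyting algebra and each $\mu_i$ an $i$-measure on $\mathbb{A}$. A pre-ordered multiset on $X$ is a multiset in which the copies $x_1,\dots,x_n$ of an element carry the linear order $x_1\prec\cdots\prec x_n$. A probabilistic event structure over $\mathbb{A}$ is $(E,(\sim_i),(P_i),\Phi,\mathsf{pre})$: $E$ non-empty finite; $\sim_i$ equivalence relations on $E$; $P_i:E\to\,]0,1]$ with $\sum\{P_i(e')\mid e'\sim_i e\}=1$; $\Phi$ a finite pre-ordered multiset on $\mathbb{A}$ such that any $a,b\in\Phi$ arising from distinct elements satisfy $a\wedge b=\bot$ or $a<b$ or $b<a$; $\mathsf{pre}(\bullet\mid a)$ a probability distribution on $E$ for each $a\in\Phi$; and if $\mathsf{pre}(e\mid a)=0$ then $\mathsf{pre}(e\mid b)=0$ for $b\in\Phi$ with $a<b$ (distinct elements) or $a\prec b$ (copies). For $a\in\Phi$: $\mathrm{mb}(a)$ is the set of maximal elements of $\Phi\cap({\downarrow}a\setminus\{a\})$, and $\mu^a_i(x):=\mu_i(x\wedge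 a)-\sum_{b\in\mathrm{mb}(a)}\mu_i(x\wedge b)$ for $x\in\mathsf{Min}_i(\mathbb{A}){\downarrow}$. Intermediate algebra $\mathbb{A}'=\prod_{\mathbb{E}}\mathbb{A}$: all maps $f:E\to\mathbb{A}$ with pointwise Heyting operations, $(\lozenge'_i f)(e)=\bigvee\{\lozenge_i f(e')\mid e'\sim_i e\}$, $(\Box'_i f)(e)=\bigwedge\{\Box_i f(e')\mid e'\sim_i e\}$; and $\mu'_i:\mathsf{Min}_i(\mathbb{A}'){\downarrow}\to\mathbb{R}^+$, $\mu'_i(f)=\sum_{e\in E}\sum_{a\in\Phi}P_i(e)\mu^a_i(f(e))\mathsf{pre}(e\mid a)$. Define $\overline{\mathsf{pre}}\in\mathbb{A}'$ by $\overline{\mathsf{pre}}(e)=\bigvee\{a\in\Phi\mid\mathsf{pre}(e\mid a)\neq0\}$. For an epistemic Heyting algebra $\mathbb{B}$ and $c\in\mathbb{B}$, the pseudo-quotient $\mathbb{B}^c$ has carrier the quotient Heyting algebra by $x\cong_c y\iff x\wedge c=y\wedge c$ (classes $[x]$, $[x]\leq[y]$ iff $x\wedge c\leq y\wedge c$), with $\lozenge^c_i[x]=[\lozenge_i(x\wedge c)]$ and $\Box^c_i[x]=[\Box_i(c\to x)]$. Set $\mathbb{A}^{\mathbb{E}}:=(\mathbb{A}')^{\overline{\mathsf{pre}}}$. The updated structure is $\mathcal{F}^{\mathbb{E}}=(\mathbb{A}^{\mathbb{E}},(\mu^{\mathbb{E}}_i))$ with $\mu^{\mathbb{E}}_i:\mathsf{Min}_i(\mathbb{A}^{\mathbb{E}}){\downarrow}\to[0,1]$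 given by $\mu^{\mathbb{E}}_i([g])=0$ if $[g]=\bot$ and otherwise $\mu^{\mathbb{E}}_i([g])=\mu'_i(g)/\mu'_i(f)$, where $[f]$ is the only element of $\mathsf{Min}_i(\mathbb{A}^{\mathbb{E}})$ with $[g]\leq[f]$. *)

theory Defs
  imports Complex_Main "HOL-Library.FuncSet"
begin

record ('a, 'i) mha =
  hcar  :: "'a set"
  hle   :: "'a \<Rightarrow> 'a \<Rightarrow> bool"
  hmeet :: "'a \<Rightarrow> 'a \<Rightarrow> 'a"
  hjoin :: "'a \<Rightarrow> 'a \<Rightarrow> 'a"
  himp  :: "'a \<Rightarrow> 'a \<Rightarrow> 'a"
  hbot  :: "'a"
  htop  :: "'a"
  hdia  :: "'i \<Rightarrow> 'a \<Rightarrow> 'a"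
  hbox  :: "'i \<Rightarrow> 'a \<Rightarrow> 'a"

definition hlt :: "('a,'i) mha \<Rightarrow> 'a \<Rightarrow> 'a \<Rightarrow> bool" where
  "hlt A x y \<longleftrightarrow> hle A x y \<and> x \<noteq> y"

definition hneg :: "('a,'i) mha \<Rightarrow> 'a \<Rightarrow> 'a" where
  "hneg A x = himp A x (hbot A)"

definition heyting_algebra :: "('a,'i) mha \<Rightarrow> bool" where
  "heyting_algebra A \<longleftrightarrow>
     (\<forall>x\<in>hcar A. hle A x x) \<and>
     (\<forall>x\<in>hcar A. \<forall>y\<in>hcar A. hle A x y \<and> hle A y x \<longrightarrow> x = y) \<and>
     (\<forall>x\<in>hcar A. \<forall>y\<in>hcar A. \<forall>z\<in>hcar A. hle A x y \<and> hle A y z \<longrightarrow> hle A x z) \<and>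
     hbot A \<in> hcar A \<and> htop A \<in> hcar A \<and>
     (\<forall>x\<in>hcar A. hle A (hbot A) x \<and> hle A x (htop A)) \<and>
     (\<forall>x\<in>hcar A. \<forall>y\<in>hcar A.
        hmeet A x y \<in> hcar A \<and> hle A (hmeet A x y) x \<and> hle A (hmeet A x y) y \<and>
        (\<forall>z\<in>hcar A. hle A z x \<and> hle A z y \<longrightarrow> hle A z (hmeet A x y))) \<and>
     (\<forall>x\<in>hcar A. \<forall>y\<in>hcar A.
        hjoin A x y \<in> hcar A \<and> hle A x (hjoin A x y) \<and> hle A y (hjoin A x y) \<and>
        (\<forall>z\<in>hcar A. hle A x z \<and> hle A y z \<longrightarrow> hle A (hjoin A x y) z)) \<and>
     (\<forall>x\<in>hcar A. \<forall>y\<in>hcar A. himp A x y \<in> hcar A \<and>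
        (\<forall>z\<in>hcar A. hle A (hmeet A z x) y \<longleftrightarrow> hle A z (himp A x y)))"

definition monadic_heyting_algebra :: "('a,'i) mha \<Rightarrow> bool" where
  "monadic_heyting_algebra A \<longleftrightarrow> heyting_algebra A \<and>
     (\<forall>i. \<forall>a\<in>hcar A. hdia A i a \<in> hcar A \<and> hbox A i a \<in> hcar A) \<and>
     (\<forall>i. \<forall>a\<in>hcar A. \<forall>b\<in>hcar A. hle A a b \<longrightarrow>
         hle A (hdia A i a) (hdia A i b) \<and> hle A (hbox A i a) (hbox A i b)) \<and>
     (\<forall>i. \<forall>a\<in>hcar A. \<forall>b\<in>hcar A.
        hle A a (hdia A i a) \<and>
        hle A (hbox A i a) a \<and>
        hle A (hdia A i (hjoin A a b)) (hjoin A (hdia A i a) (hdia A i b)) \<and>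
        hle A (hbox A i (himp A a b)) (himp A (hbox A i a) (hbox A i b)) \<and>
        hle A (hdia A i a) (hbox A i (hdia A i a)) \<and>
        hle A (hdia A i (hbox A i a)) (hbox A i a) \<and>
        hle A (hbox A i (himp A a b)) (himp A (hdia A i a) (hdia A i b))) \<and>
     (\<forall>i. hle A (hdia A i (hbot A)) (hbot A) \<and> hle A (htop A) (hbox A i (htop A)))"

definition epistemic_heyting_algebra :: "('a,'i) mha \<Rightarrow> bool" where
  "epistemic_heyting_algebra A \<longleftrightarrow> monadic_heyting_algebra A \<and> finite (hcar A) \<and>
     (\<forall>i. \<forall>a\<in>hcar A. hjoin A (hdia A i a) (hneg A (hdia A i a)) = htop A)"

definition i_minimal :: "('a,'i) mha \<Rightarrow> 'i \<Rightarrow> 'a \<Rightarrow> bool" where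
  "i_minimal A i c \<longleftrightarrow> c \<in> hcar A \<and> c \<noteq> hbot A \<and> hdia A i c = c \<and>
     (\<forall>d\<in>hcar A. hlt A d c \<and> hdia A i d = d \<longrightarrow> d = hbot A)"

definition Min_i :: "('a,'i) mha \<Rightarrow> 'i \<Rightarrow> 'a set" where
  "Min_i A i = {c. i_minimal A i c}"

definition Min_down :: "('a,'i) mha \<Rightarrow> 'i \<Rightarrow> 'a set" where
  "Min_down A i = {x \<in> hcar A. \<exists>c\<in>Min_i A i. hle A x c}"

text \<open>Partial maps into the non-negative reals are rendered as 'a => real option.\<close>

definition i_premeasure :: "('a,'i) mha \<Rightarrow> 'i \<Rightarrow> ('a \<Rightarrow> real option) \<Rightarrow> bool" where
  "i_premeasure A i \<mu> \<longleftrightarrow>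
     dom \<mu> = Min_down A i \<and>
     (\<forall>x\<in>dom \<mu>. 0 \<le> the (\<mu> x)) \<and>
     (\<forall>x\<in>dom \<mu>. \<forall>y\<in>dom \<mu>. hle A x y \<longrightarrow> the (\<mu> x) \<le> the (\<mu> y)) \<and>
     (\<forall>a\<in>Min_i A i. \<forall>b\<in>hcar A. \<forall>c\<in>hcar A. hle A b a \<and> hle A c a \<longrightarrow>
        the (\<mu> (hjoin A b c)) = the (\<mu> b) + the (\<mu> c) - the (\<mu> (hmeet A b c))) \<and>
     (dom \<mu> \<noteq> {} \<longrightarrow> \<mu> (hbot A) = Some 0)"

definition i_measure :: "('a,'i) mha \<Rightarrow> 'i \<Rightarrow> ('a \<Rightarrow> real option) \<Rightarrow> bool" where
  "i_measure A i \<mu> \<longleftrightarrow> i_premeasure A i \<mu> \<and>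
     (\<forall>a\<in>Min_i A i. \<forall>b\<in>hcar A. \<forall>c\<in>hcar A. hlt A b c \<and> hle A c a \<longrightarrow>
        the (\<mu> b) < the (\<mu> c)) \<and>
     (\<forall>a\<in>Min_i A i. \<mu> a = Some 1)"

definition APE_structure :: "('a,'i) mha \<Rightarrow> ('i \<Rightarrow> 'a \<Rightarrow> real option) \<Rightarrow> bool" where
  "APE_structure A \<mu> \<longleftrightarrow> epistemic_heyting_algebra A \<and> (\<forall>i. i_measure A i (\<mu> i))"

text \<open>The pre-ordered multiset \<Phi> on the algebra is a finite set of pairs (a, k):
  the copies of an element a are (a,0), (a,1), ..., (a,n-1), ordered by their
  index.\<close>

definition phi_less :: "('a,'i) mha \<Rightarrow> ('a \<times> nat) \<Rightarrow> ('a \<times> nat) \<Rightarrow> bool" where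
  "phi_less A p q \<longleftrightarrow> hlt A (fst p) (fst q) \<or> (fst p = fst q \<and> snd p < snd q)"

definition prob_event_structure ::
  "('a,'i) mha \<Rightarrow> 'e set \<Rightarrow> ('i \<Rightarrow> 'e \<Rightarrow> 'e \<Rightarrow> bool) \<Rightarrow> ('i \<Rightarrow> 'e \<Rightarrow> real)
   \<Rightarrow> ('a \<times> nat) set \<Rightarrow> ('e \<Rightarrow> ('a \<times> nat) \<Rightarrow> real) \<Rightarrow> bool" where
  "prob_event_structure A E sim P \<Phi> pre \<longleftrightarrow>
     finite E \<and> E \<noteq> {} \<and>
     (\<forall>i. (\<forall>e\<in>E. sim i e e) \<and> (\<forall>e\<in>E. \<forall>e'\<in>E. sim i e e' \<longrightarrow> sim i e' e) \<and>
          (\<forall>e\<in>E. \<forall>e'\<in>E. \<forall>e''\<in>E. sim i e e' \<and> sim i e' e'' \<longrightarrow> sim i e e'')) \<and>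
     (\<forall>i. \<forall>e\<in>E. 0 < P i e \<and> P i e \<le> 1) \<and>
     (\<forall>i. \<forall>e\<in>E. (\<Sum>e'\<in>{e'\<in>E. sim i e' e}. P i e') = 1) \<and>
     finite \<Phi> \<and>
     (\<forall>p\<in>\<Phi>. fst p \<in> hcar A \<and> (\<forall>m < snd p. (fst p, m) \<in> \<Phi>)) \<and>
     (\<forall>p\<in>\<Phi>. \<forall>q\<in>\<Phi>. fst p \<noteq> fst q \<longrightarrow>
        hmeet A (fst p) (fst q) = hbot A \<or> hlt A (fst p) (fst q) \<or> hlt A (fst q) (fst p)) \<and>
     (\<forall>p\<in>\<Phi>. (\<forall>e\<in>E. 0 \<le> pre e p) \<and> (\<Sum>e\<in>E. pre e p) = 1) \<and>
     (\<forall>p\<in>\<Phi>. \<forall>q\<in>\<Phi>. phi_less A p q \<longrightarrow> (\<forall>e\<in>E. pre e p = 0 \<longrightarrow> pre e q = 0))"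

definition mb :: "('a,'i) mha \<Rightarrow> ('a \<times> nat) set \<Rightarrow> ('a \<times> nat) \<Rightarrow> ('a \<times> nat) set" where
  "mb A \<Phi> p = {q\<in>\<Phi>. phi_less A q p \<and> \<not> (\<exists>r\<in>\<Phi>. phi_less A r p \<and> phi_less A q r)}"

definition mu_a :: "('a,'i) mha \<Rightarrow> ('a \<Rightarrow> real option) \<Rightarrow> ('a \<times> nat) set \<Rightarrow> ('a \<times> nat) \<Rightarrow> 'a \<Rightarrow> real" where
  "mu_a A \<mu> \<Phi> p x = the (\<mu> (hmeet A x (fst p))) - (\<Sum>q\<in>mb A \<Phi> p. the (\<mu> (hmeet A x (fst q))))"

definition bigjoin :: "('a,'i) mha \<Rightarrow> 'a set \<Rightarrow> 'a" where
  "bigjoin A S = (THE x. x \<in> hcar A \<and> (\<forall>s\<in>S. hle A s x) \<and>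
                          (\<forall>y\<in>hcar A. (\<forall>s\<in>S. hle A s y) \<longrightarrow> hle A x y))"

definition bigmeet :: "('a,'i) mha \<Rightarrow> 'a set \<Rightarrow> 'a" where
  "bigmeet A S = (THE x. x \<in> hcar A \<and> (\<forall>s\<in>S. hle A x s) \<and>
                          (\<forall>y\<in>hcar A. (\<forall>s\<in>S. hle A y s) \<longrightarrow> hle A y x))"

text \<open>Maps E -> A are represented as extensional functions (undefined outside E).\<close>
definition inter_alg :: "('a,'i) mha \<Rightarrow> 'e set \<Rightarrow> ('i \<Rightarrow> 'e \<Rightarrow> 'e \<Rightarrow> bool) \<Rightarrow> ('e \<Rightarrow> 'a, 'i) mha" where
  "inter_alg A E sim = \<lparr>
     hcar = PiE E (\<lambda>_. hcar A),
     hle = (\<lambda>f g. \<forall>e\<in>E. hle A (f e) (g e)),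
     hmeet = (\<lambda>f g. restrict (\<lambda>e. hmeet A (f e) (g e)) E),
     hjoin = (\<lambda>f g. restrict (\<lambda>e. hjoin A (f e) (g e)) E),
     himp = (\<lambda>f g. restrict (\<lambda>e. himp A (f e) (g e)) E),
     hbot = restrict (\<lambda>e. hbot A) E,
     htop = restrict (\<lambda>e. htop A) E,
     hdia = (\<lambda>i f. restrict (\<lambda>e. bigjoin A {hdia A i (f e') | e'. e' \<in> E \<and> sim i e' e}) E),
     hbox = (\<lambda>i f. restrict (\<lambda>e. bigmeet A {hbox A i (f e') | e'. e' \<in> E \<and> sim i e' e}) E) \<rparr>"

definition mu_inter ::
  "('a,'i) mha \<Rightarrow> ('i \<Rightarrow> 'a \<Rightarrow> real option) \<Rightarrow> 'e set \<Rightarrow> ('i \<Rightarrow> 'e \<Rightarrow> 'e \<Rightarrow> bool) \<Rightarrow> ('i \<Rightarrow> 'e \<Rightarrow> real)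
   \<Rightarrow> ('a \<times> nat) set \<Rightarrow> ('e \<Rightarrow> ('a \<times> nat) \<Rightarrow> real) \<Rightarrow> 'i \<Rightarrow> ('e \<Rightarrow> 'a) \<Rightarrow> real option" where
  "mu_inter A \<mu> E sim P \<Phi> pre i f =
     (if f \<in> Min_down (inter_alg A E sim) i
      then Some (\<Sum>e\<in>E. \<Sum>p\<in>\<Phi>. P i e * mu_a A (\<mu> i) \<Phi> p (f e) * pre e p)
      else None)"

definition pq_cls :: "('b,'i) mha \<Rightarrow> 'b \<Rightarrow> 'b \<Rightarrow> 'b set" where
  "pq_cls B c x = {y \<in> hcar B. hmeet B y c = hmeet B x c}"

definition pq_rep :: "'b set \<Rightarrow> 'b" where
  "pq_rep X = (SOME x. x \<in> X)"

definition pquot :: "('b,'i) mha \<Rightarrow> 'b \<Rightarrow> ('b set, 'i) mha" where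
  "pquot B c = \<lparr>
     hcar = pq_cls B c ` hcar B,
     hle = (\<lambda>X Y. hle B (hmeet B (pq_rep X) c) (hmeet B (pq_rep Y) c)),
     hmeet = (\<lambda>X Y. pq_cls B c (hmeet B (pq_rep X) (pq_rep Y))),
     hjoin = (\<lambda>X Y. pq_cls B c (hjoin B (pq_rep X) (pq_rep Y))),
     himp = (\<lambda>X Y. pq_cls B c (himp B (pq_rep X) (pq_rep Y))),
     hbot = pq_cls B c (hbot B),
     htop = pq_cls B c (htop B),
     hdia = (\<lambda>i X. pq_cls B c (hdia B i (hmeet B (pq_rep X) c))),
     hbox = (\<lambda>i X. pq_cls B c (hbox B i (himp B c (pq_rep X)))) \<rparr>"

definition prebar :: "('a,'i) mha \<Rightarrow> 'e set \<Rightarrow> ('a \<times> nat) set \<Rightarrow> ('e \<Rightarrow> ('a \<times> nat) \<Rightarrow> real) \<Rightarrow> 'e \<Rightarrow> 'a" where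
  "prebar A E \<Phi> pre = restrict (\<lambda>e. bigjoin A {fst p | p. p \<in> \<Phi> \<and> pre e p \<noteq> 0}) E"

definition upd_alg ::
  "('a,'i) mha \<Rightarrow> 'e set \<Rightarrow> ('i \<Rightarrow> 'e \<Rightarrow> 'e \<Rightarrow> bool) \<Rightarrow> ('a \<times> nat) set
   \<Rightarrow> ('e \<Rightarrow> ('a \<times> nat) \<Rightarrow> real) \<Rightarrow> (('e \<Rightarrow> 'a) set, 'i) mha" where
  "upd_alg A E sim \<Phi> pre = pquot (inter_alg A E sim) (prebar A E \<Phi> pre)"

text \<open>mu^E([g]) = mu'(g) / mu'(f), where g is a representative of the class lying in
  the domain of mu', and [f] is the unique i-minimal class above [g] (again with f a
  representative in the domain of mu').\<close>
definition upd_mu ::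
  "('a,'i) mha \<Rightarrow> ('i \<Rightarrow> 'a \<Rightarrow> real option) \<Rightarrow> 'e set \<Rightarrow> ('i \<Rightarrow> 'e \<Rightarrow> 'e \<Rightarrow> bool) \<Rightarrow> ('i \<Rightarrow> 'e \<Rightarrow> real)
   \<Rightarrow> ('a \<times> nat) set \<Rightarrow> ('e \<Rightarrow> ('a \<times> nat) \<Rightarrow> real) \<Rightarrow> 'i \<Rightarrow> ('e \<Rightarrow> 'a) set \<Rightarrow> real option" where
  "upd_mu A \<mu> E sim P \<Phi> pre i X =
     (let AE = upd_alg A E sim \<Phi> pre;
          m' = mu_inter A \<mu> E sim P \<Phi> pre i
      in if X \<in> Min_down AE i then
           (if X = hbot AE then Some 0
            else (let F = (THE F. F \<in> Min_i AE i \<and> hle AE X F);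
                      g = (SOME g. g \<in> X \<and> g \<in> dom m');
                      f = (SOME f. f \<in> F \<and> f \<in> dom m')
                  in Some (the (m' g) / the (m' f))))
         else None)"

end

theory Submission
  imports Defs
begin

locale ha =
  fixes A :: "('a,'i) mha"
  assumes HA: "heyting_algebra A"
begin

abbreviation "C \<equiv> hcar A"
abbreviation "le \<equiv> hle A"
abbreviation "mt \<equiv> hmeet A"
abbreviation "jn \<equiv> hjoin A"
abbreviation "im \<equiv> himp A"
abbreviation "bt \<equiv> hbot A"
abbreviation "tp \<equiv> htop A"

lemmas H = HA[unfolded heyting_algebra_def]
lemmas H1 = H[THEN conjunct1] and H2 = H[THEN conjunct2, THEN conjunct1]
  and H3 = H[THEN conjunct2, THEN conjunct2, THEN conjunct1]
  and H4 = H[THEN conjunct2, THEN conjunct2, THEN conjunct2, THEN conjunct1]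
  and H5 = H[THEN conjunct2, THEN conjunct2, THEN conjunct2, THEN conjunct2, THEN conjunct1]
  and H6 = H[THEN conjunct2, THEN conjunct2, THEN conjunct2, THEN conjunct2, THEN conjunct2, THEN conjunct1]
  and H7 = H[THEN conjunct2, THEN conjunct2, THEN conjunct2, THEN conjunct2, THEN conjunct2, THEN conjunct2, THEN conjunct1]
  and H8 = H[THEN conjunct2, THEN conjunct2, THEN conjunct2, THEN conjunct2, THEN conjunct2, THEN conjunct2, THEN conjunct2, THEN conjunct1]
  and H9 = H[THEN conjunct2, THEN conjunct2, THEN conjunct2, THEN conjunct2, THEN conjunct2, THEN conjunct2, THEN conjunct2, THEN conjunct2]

lemma refl[simp]: "x \<in> C \<Longrightarrow> le x x"
  using H1 by blast
lemma antisym: "x \<in> C \<Longrightarrow> y \<in> C \<Longrightarrow> le x y \<Longrightarrow> le y x \<Longrightarrow> x = y"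
  using H2 by blast
lemma trans: "le x y \<Longrightarrow> le y z \<Longrightarrow> x \<in> C \<Longrightarrow> y \<in> C \<Longrightarrow> z \<in> C \<Longrightarrow> le x z"
  using H3 by blast
lemma bot_in[simp]: "bt \<in> C" and top_in[simp]: "tp \<in> C"
  using H4 H5 by blast+
lemma bot_le[simp]: "x \<in> C \<Longrightarrow> le bt x" and le_top[simp]: "x \<in> C \<Longrightarrow> le x tp"
  using H6 by blast+
lemma meet_in[simp]: "x \<in> C \<Longrightarrow> y \<in> C \<Longrightarrow> mt x y \<in> C"
  using H7 by blast
lemma join_in[simp]: "x \<in> C \<Longrightarrow> y \<in> C \<Longrightarrow> jn x y \<in> C"
  using H8 by blast
lemma imp_in[simp]: "x \<in> C \<Longrightarrow> y \<in> C \<Longrightarrow> im x y \<in> C"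
  using H9 by blast
lemma le_meet_iff[simp]: "x \<in> C \<Longrightarrow> y \<in> C \<Longrightarrow> z \<in> C \<Longrightarrow> le z (mt x y) \<longleftrightarrow> le z x \<and> le z y"
proof -
  assume a: "x \<in> C" "y \<in> C" "z \<in> C"
  have "le (mt x y) x" "le (mt x y) y" "le z x \<and> le z y \<longrightarrow> le z (mt x y)"
    using H7 H8 a by blast+
  then show ?thesis using trans a by (meson meet_in)
qed
lemma join_le_iff[simp]: "x \<in> C \<Longrightarrow> y \<in> C \<Longrightarrow> z \<in> C \<Longrightarrow> le (jn x y) z \<longleftrightarrow> le x z \<and> le y z"
proof -
  assume a: "x \<in> C" "y \<in> C" "z \<in> C"
  have "le x (jn x y)" "le y (jn x y)" "le x z \<and> le y z \<longrightarrow> le (jn x y) z"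
    using H7 H8 a by blast+
  then show ?thesis using trans a by (meson join_in)
qed
lemma le_imp_iff: "x \<in> C \<Longrightarrow> y \<in> C \<Longrightarrow> z \<in> C \<Longrightarrow> le z (im x y) \<longleftrightarrow> le (mt z x) y"
  using H9 by blast

lemma meet_le1[simp]: "x \<in> C \<Longrightarrow> y \<in> C \<Longrightarrow> le (mt x y) x"
  using le_meet_iff[of x y "mt x y"] by simp
lemma meet_le2[simp]: "x \<in> C \<Longrightarrow> y \<in> C \<Longrightarrow> le (mt x y) y"
  using le_meet_iff[of x y "mt x y"] by simp
lemma join_ge1[simp]: "x \<in> C \<Longrightarrow> y \<in> C \<Longrightarrow> le x (jn x y)"
  using join_le_iff[of x y "jn x y"] by simp
lemma join_ge2[simp]: "x \<in> C \<Longrightarrow> y \<in> C \<Longrightarrow> le y (jn x y)"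
  using join_le_iff[of x y "jn x y"] by simp

lemma le_bot_iff: "x \<in> C \<Longrightarrow> le x bt \<longleftrightarrow> x = bt"
  using antisym by auto

lemma meet_le1I: "le x z \<Longrightarrow> x \<in> C \<Longrightarrow> y \<in> C \<Longrightarrow> z \<in> C \<Longrightarrow> le (mt x y) z"
  using trans[of "mt x y" x z] by simp
lemma meet_le2I: "le y z \<Longrightarrow> x \<in> C \<Longrightarrow> y \<in> C \<Longrightarrow> z \<in> C \<Longrightarrow> le (mt x y) z"
  using trans[of "mt x y" y z] by simp
lemma join_ge1I: "le z x \<Longrightarrow> x \<in> C \<Longrightarrow> y \<in> C \<Longrightarrow> z \<in> C \<Longrightarrow> le z (jn x y)"
  using trans[of z x "jn x y"] by simp
lemma join_ge2I: "le z y \<Longrightarrow> x \<in> C \<Longrightarrow> y \<in> C \<Longrightarrow> z \<in> C \<Longrightarrow> le z (jn x y)"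
  using trans[of z y "jn x y"] by simp

lemma meet_comm: "x \<in> C \<Longrightarrow> y \<in> C \<Longrightarrow> mt x y = mt y x"
  by (rule antisym) auto
lemma meet_assoc: "x \<in> C \<Longrightarrow> y \<in> C \<Longrightarrow> z \<in> C \<Longrightarrow> mt (mt x y) z = mt x (mt y z)"
  by (rule antisym) (auto intro: meet_le1I meet_le2I)
lemma meet_idem[simp]: "x \<in> C \<Longrightarrow> mt x x = x"
  by (rule antisym) auto
lemma meet_absorb1: "le x y \<Longrightarrow> x \<in> C \<Longrightarrow> y \<in> C \<Longrightarrow> mt x y = x"
  by (rule antisym) auto
lemma meet_absorb2: "le y x \<Longrightarrow> x \<in> C \<Longrightarrow> y \<in> C \<Longrightarrow> mt x y = y"
  by (rule antisym) auto
lemma join_comm: "x \<in> C \<Longrightarrow> y \<in> C \<Longrightarrow> jn x y = jn y x"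
  by (rule antisym) auto
lemma join_absorb1: "le y x \<Longrightarrow> x \<in> C \<Longrightarrow> y \<in> C \<Longrightarrow> jn x y = x"
  by (rule antisym) auto
lemma join_absorb2: "le x y \<Longrightarrow> x \<in> C \<Longrightarrow> y \<in> C \<Longrightarrow> jn x y = y"
  by (rule antisym) auto
lemma meet_bot[simp]: "x \<in> C \<Longrightarrow> mt x bt = bt" "x \<in> C \<Longrightarrow> mt bt x = bt"
  by (auto intro: meet_absorb2 meet_absorb1)
lemma meet_top[simp]: "x \<in> C \<Longrightarrow> mt x tp = x" "x \<in> C \<Longrightarrow> mt tp x = x"
  by (auto intro: meet_absorb2 meet_absorb1)
lemma join_bot[simp]: "x \<in> C \<Longrightarrow> jn x bt = x" "x \<in> C \<Longrightarrow> jn bt x = x"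
  by (auto intro: join_absorb2 join_absorb1)

lemma meet_mono: "le x x' \<Longrightarrow> le y y' \<Longrightarrow> x \<in> C \<Longrightarrow> y \<in> C \<Longrightarrow> x' \<in> C \<Longrightarrow> y' \<in> C \<Longrightarrow> le (mt x y) (mt x' y')"
  by (auto intro: meet_le1I meet_le2I)
lemma join_mono: "le x x' \<Longrightarrow> le y y' \<Longrightarrow> x \<in> C \<Longrightarrow> y \<in> C \<Longrightarrow> x' \<in> C \<Longrightarrow> y' \<in> C \<Longrightarrow> le (jn x y) (jn x' y')"
  by (auto intro: join_ge1I join_ge2I)

lemma mp_le: "x \<in> C \<Longrightarrow> y \<in> C \<Longrightarrow> le (mt (im x y) x) y"
  using le_imp_iff[of x y "im x y"] by simp
lemma mp_le2: "x \<in> C \<Longrightarrow> y \<in> C \<Longrightarrow> le (mt x (im x y)) y"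
  using mp_le meet_comm by simp

lemma distrib: "x \<in> C \<Longrightarrow> y \<in> C \<Longrightarrow> z \<in> C \<Longrightarrow> mt x (jn y z) = jn (mt x y) (mt x z)"
proof (rule antisym)
  assume a: "x \<in> C" "y \<in> C" "z \<in> C"
  let ?R = "jn (mt x y) (mt x z)"
  have "le (mt y x) ?R" using a meet_comm[of x y] by (simp)
  hence 1: "le y (im x ?R)" using a le_imp_iff by simp
  have "le (mt z x) ?R" using a meet_comm[of x z] by (simp)
  hence 2: "le z (im x ?R)" using a le_imp_iff by simp
  have "le (jn y z) (im x ?R)" using 1 2 a by simp
  hence "le (mt (jn y z) x) ?R" using a le_imp_iff by simp
  thus "le (mt x (jn y z)) ?R" using a meet_comm[of x "jn y z"] by simp
qed (auto intro: join_ge1I join_ge2I meet_le2I)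

lemma distrib2: "x \<in> C \<Longrightarrow> y \<in> C \<Longrightarrow> z \<in> C \<Longrightarrow> mt (jn y z) x = jn (mt y x) (mt z x)"
  using distrib meet_comm by simp

lemma imp_mono2: "le y y' \<Longrightarrow> x \<in> C \<Longrightarrow> y \<in> C \<Longrightarrow> y' \<in> C \<Longrightarrow> le (im x y) (im x y')"
  using le_imp_iff mp_le trans by (meson imp_in meet_in)

lemma imp_top: "le x y \<Longrightarrow> x \<in> C \<Longrightarrow> y \<in> C \<Longrightarrow> im x y = tp"
  by (rule antisym) (auto simp: le_imp_iff)

lemma imp_congr_meet: "c \<in> C \<Longrightarrow> u \<in> C \<Longrightarrow> v \<in> C \<Longrightarrow> mt c u = mt c v \<Longrightarrow> im c u = im c v"
proof -
  assume a: "c \<in> C" "u \<in> C" "v \<in> C" "mt c u = mt c v"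
  have "\<And>z. z \<in> C \<Longrightarrow> le z (im c u) \<longleftrightarrow> le z (im c v)"
  proof -
    fix z assume z: "z \<in> C"
    have "le (mt z c) u \<longleftrightarrow> le (mt z c) (mt c u)" using a(1-3) z by simp
    also have "\<dots> \<longleftrightarrow> le (mt z c) (mt c v)" using a by simp
    also have "\<dots> \<longleftrightarrow> le (mt z c) v" using a z by simp
    finally have eq: "le (mt z c) u \<longleftrightarrow> le (mt z c) v" .
    show "le z (im c u) \<longleftrightarrow> le z (im c v)"
      unfolding le_imp_iff[OF a(1) a(2) z] le_imp_iff[OF a(1) a(3) z] by (rule eq)
  qed
  thus ?thesis using a by (meson antisym imp_in refl)
qed

lemma neg_meet: "x \<in> C \<Longrightarrow> mt x (im x bt) = bt"
  using mp_le2[of x bt] le_bot_iff by simp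

lemma le_neg_iff: "x \<in> C \<Longrightarrow> z \<in> C \<Longrightarrow> le z (im x bt) \<longleftrightarrow> mt z x = bt"
  using le_imp_iff le_bot_iff by simp

end

context ha begin

lemma bigjoin_eqI:
  assumes "x \<in> C" "\<forall>s\<in>S. le s x" "\<forall>y\<in>C. (\<forall>s\<in>S. le s y) \<longrightarrow> le x y"
  shows "bigjoin A S = x"
  unfolding bigjoin_def
proof (rule the_equality)
  show "x \<in> C \<and> (\<forall>s\<in>S. le s x) \<and> (\<forall>y\<in>C. (\<forall>s\<in>S. le s y) \<longrightarrow> le x y)" using assms by blast
next
  fix z assume "z \<in> C \<and> (\<forall>s\<in>S. le s z) \<and> (\<forall>y\<in>C. (\<forall>s\<in>S. le s y) \<longrightarrow> le z y)"
  thus "z = x" using assms antisym by blast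
qed

lemma bigmeet_eqI:
  assumes "x \<in> C" "\<forall>s\<in>S. le x s" "\<forall>y\<in>C. (\<forall>s\<in>S. le y s) \<longrightarrow> le y x"
  shows "bigmeet A S = x"
  unfolding bigmeet_def
proof (rule the_equality)
  show "x \<in> C \<and> (\<forall>s\<in>S. le x s) \<and> (\<forall>y\<in>C. (\<forall>s\<in>S. le y s) \<longrightarrow> le y x)" using assms by blast
next
  fix z assume "z \<in> C \<and> (\<forall>s\<in>S. le z s) \<and> (\<forall>y\<in>C. (\<forall>s\<in>S. le y s) \<longrightarrow> le y z)"
  thus "z = x" using assms antisym by blast
qed

lemma lub_exists:
  assumes "finite S" "S \<subseteq> C"
  shows "\<exists>x. x \<in> C \<and> (\<forall>s\<in>S. le s x) \<and> (\<forall>y\<in>C. (\<forall>s\<in>S. le s y) \<longrightarrow> le x y)"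
  using assms
proof (induction S rule: finite_induct)
  case empty
  then show ?case by (intro exI[of _ bt]) auto
next
  case (insert a F)
  then obtain x where x: "x \<in> C" "\<forall>s\<in>F. le s x" "\<forall>y\<in>C. (\<forall>s\<in>F. le s y) \<longrightarrow> le x y" by auto
  have a: "a \<in> C" using insert by auto
  show ?case
    apply (intro exI[of _ "jn a x"])
    using x a insert.prems by (auto intro: join_ge2I)
qed

lemma glb_exists:
  assumes "finite S" "S \<subseteq> C"
  shows "\<exists>x. x \<in> C \<and> (\<forall>s\<in>S. le x s) \<and> (\<forall>y\<in>C. (\<forall>s\<in>S. le y s) \<longrightarrow> le y x)"
  using assms
proof (induction S rule: finite_induct)
  case empty
  then show ?case by (intro exI[of _ tp]) auto
next
  case (insert a F)
  then obtain x where x: "x \<in> C" "\<forall>s\<in>F. le x s" "\<forall>y\<in>C. (\<forall>s\<in>F. le y s) \<longrightarrow> le y x" by auto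
  have a: "a \<in> C" using insert by auto
  show ?case
    apply (intro exI[of _ "mt a x"])
    using x a insert.prems by (auto intro: meet_le2I)
qed

lemma bigjoin:
  assumes "finite S" "S \<subseteq> C"
  shows "bigjoin A S \<in> C" "\<And>s. s \<in> S \<Longrightarrow> le s (bigjoin A S)"
    "\<And>y. y \<in> C \<Longrightarrow> (\<forall>s\<in>S. le s y) \<Longrightarrow> le (bigjoin A S) y"
proof -
  obtain x where x: "x \<in> C" "\<forall>s\<in>S. le s x" "\<forall>y\<in>C. (\<forall>s\<in>S. le s y) \<longrightarrow> le x y"
    using lub_exists[OF assms] by blast
  have "bigjoin A S = x" using bigjoin_eqI[OF x] .
  thus "bigjoin A S \<in> C" "\<And>s. s \<in> S \<Longrightarrow> le s (bigjoin A S)"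
    "\<And>y. y \<in> C \<Longrightarrow> (\<forall>s\<in>S. le s y) \<Longrightarrow> le (bigjoin A S) y" using x by auto
qed

lemma bigmeet:
  assumes "finite S" "S \<subseteq> C"
  shows "bigmeet A S \<in> C" "\<And>s. s \<in> S \<Longrightarrow> le (bigmeet A S) s"
    "\<And>y. y \<in> C \<Longrightarrow> (\<forall>s\<in>S. le y s) \<Longrightarrow> le y (bigmeet A S)"
proof -
  obtain x where x: "x \<in> C" "\<forall>s\<in>S. le x s" "\<forall>y\<in>C. (\<forall>s\<in>S. le y s) \<longrightarrow> le y x"
    using glb_exists[OF assms] by blast
  have "bigmeet A S = x" using bigmeet_eqI[OF x] .
  thus "bigmeet A S \<in> C" "\<And>s. s \<in> S \<Longrightarrow> le (bigmeet A S) s"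
    "\<And>y. y \<in> C \<Longrightarrow> (\<forall>s\<in>S. le y s) \<Longrightarrow> le y (bigmeet A S)" using x by auto
qed

lemma ex_min:
  assumes "finite C" "x \<in> S" "S \<subseteq> C"
  shows "\<exists>m\<in>S. \<forall>d\<in>S. le d m \<longrightarrow> d = m"
proof -
  define f where "f m = card {y\<in>C. le y m}" for m
  obtain m where m: "m \<in> S" "\<forall>y. y \<in> S \<longrightarrow> f m \<le> f y"
    using ex_has_least_nat[of "\<lambda>m. m \<in> S" x f] assms by blast
  have "\<forall>d\<in>S. le d m \<longrightarrow> d = m"
  proof (intro ballI impI, rule ccontr)
    fix d assume d: "d \<in> S" "le d m" "d \<noteq> m"
    have "{y\<in>C. le y d} \<subset> {y\<in>C. le y m}"
    proof
      show "{y\<in>C. le y d} \<subseteq> {y\<in>C. le y m}" using d trans assms m by blast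
      show "{y\<in>C. le y d} \<noteq> {y\<in>C. le y m}"
      proof
        assume "{y\<in>C. le y d} = {y\<in>C. le y m}"
        moreover have "m \<in> {y\<in>C. le y m}" using m assms by auto
        ultimately have "le m d" by blast
        thus False using d antisym assms m by blast
      qed
    qed
    hence "f d < f m" unfolding f_def using assms(1) by (simp add: psubset_card_mono)
    thus False using m d by force
  qed
  thus ?thesis using m by blast
qed

end

locale mha = ha +
  assumes MHA: "monadic_heyting_algebra A"
begin

abbreviation "dia \<equiv> hdia A"
abbreviation "box \<equiv> hbox A"

lemmas M = MHA[unfolded monadic_heyting_algebra_def]
lemmas M1 = M[THEN conjunct2, THEN conjunct1]
  and M2 = M[THEN conjunct2, THEN conjunct2, THEN conjunct1]
  and M3 = M[THEN conjunct2, THEN conjunct2, THEN conjunct2, THEN conjunct1]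
  and M4 = M[THEN conjunct2, THEN conjunct2, THEN conjunct2, THEN conjunct2]

lemma dia_in[simp]: "a \<in> C \<Longrightarrow> dia i a \<in> C" and box_in[simp]: "a \<in> C \<Longrightarrow> box i a \<in> C"
  using M1 by blast+
lemma dia_mono: "le a b \<Longrightarrow> a \<in> C \<Longrightarrow> b \<in> C \<Longrightarrow> le (dia i a) (dia i b)"
  and box_mono: "le a b \<Longrightarrow> a \<in> C \<Longrightarrow> b \<in> C \<Longrightarrow> le (box i a) (box i b)"
  using M2 by blast+
lemma le_dia: "a \<in> C \<Longrightarrow> le a (dia i a)"
  using M3 by blast
lemma box_le: "a \<in> C \<Longrightarrow> le (box i a) a"
  using M3 by blast
lemma dia_join: "a \<in> C \<Longrightarrow> b \<in> C \<Longrightarrow> le (dia i (jn a b)) (jn (dia i a) (dia i b))"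
  using M3 by blast
lemma box_imp: "a \<in> C \<Longrightarrow> b \<in> C \<Longrightarrow> le (box i (im a b)) (im (box i a) (box i b))"
  using M3 by blast
lemma dia_box_dia: "a \<in> C \<Longrightarrow> le (dia i a) (box i (dia i a))"
  using M3 by blast
lemma dia_box: "a \<in> C \<Longrightarrow> le (dia i (box i a)) (box i a)"
  using M3 by blast
lemma box_imp_dia: "a \<in> C \<Longrightarrow> b \<in> C \<Longrightarrow> le (box i (im a b)) (im (dia i a) (dia i b))"
  using M3 by blast
lemma dia_bot_le: "le (dia i bt) bt" and top_box_le: "le tp (box i tp)"
  using M4 by blast+

lemma dia_bot[simp]: "dia i bt = bt"
  using dia_bot_le le_bot_iff by simp

lemma dia_dia[simp]: "a \<in> C \<Longrightarrow> dia i (dia i a) = dia i a"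
proof -
  assume a: "a \<in> C"
  have "le (dia i (dia i a)) (dia i (box i (dia i a)))"
    using a dia_box_dia dia_mono by simp
  also have "le \<dots> (box i (dia i a))" using a dia_box by simp
  hence "le (dia i (dia i a)) (box i (dia i a))" using calculation trans a by simp
  hence "le (dia i (dia i a)) (dia i a)" using box_le[of "dia i a" i] trans a by simp
  thus ?thesis using a le_dia antisym by simp
qed

lemma dia_closed_meet:
  "x \<in> C \<Longrightarrow> y \<in> C \<Longrightarrow> dia i x = x \<Longrightarrow> dia i y = y \<Longrightarrow> dia i (mt x y) = mt x y"
proof -
  assume a: "x \<in> C" "y \<in> C" "dia i x = x" "dia i y = y"
  have "le (dia i (mt x y)) x" using dia_mono[of "mt x y" x i] a by simp
  moreover have "le (dia i (mt x y)) y" using dia_mono[of "mt x y" y i] a by simp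
  ultimately have "le (dia i (mt x y)) (mt x y)" using a by simp
  thus ?thesis using a le_dia antisym by simp
qed

lemma box_mp: "a \<in> C \<Longrightarrow> b \<in> C \<Longrightarrow> le (mt (box i (im a b)) (box i a)) (box i b)"
  using box_imp[of a b i] le_imp_iff by simp

lemma Min_iD: "c \<in> Min_i A i \<Longrightarrow> c \<in> C \<and> c \<noteq> bt \<and> dia i c = c \<and>
     (\<forall>d\<in>C. hlt A d c \<and> dia i d = d \<longrightarrow> d = bt)"
  unfolding Min_i_def i_minimal_def by blast

lemma Min_unique:
  assumes "F1 \<in> Min_i A i" "F2 \<in> Min_i A i" "x \<in> C" "le x F1" "le x F2" "x \<noteq> bt"
  shows "F1 = F2"
proof -
  have f: "F1 \<in> C" "F2 \<in> C" "dia i F1 = F1" "dia i F2 = F2" using assms Min_iD by blast+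
  have m: "dia i (mt F1 F2) = mt F1 F2" using dia_closed_meet f by blast
  have nb: "mt F1 F2 \<noteq> bt"
  proof
    assume "mt F1 F2 = bt"
    hence "le x bt" using assms f le_meet_iff[of F1 F2 x] by simp
    thus False using assms le_bot_iff by simp
  qed
  have "mt F1 F2 = F1"
  proof (rule ccontr)
    assume "mt F1 F2 \<noteq> F1"
    hence "hlt A (mt F1 F2) F1" unfolding hlt_def using f by simp
    thus False using Min_iD[OF assms(1)] m nb f by auto
  qed
  moreover have "mt F1 F2 = F2"
  proof (rule ccontr)
    assume "mt F1 F2 \<noteq> F2"
    hence "hlt A (mt F1 F2) F2" unfolding hlt_def using f by simp
    thus False using Min_iD[OF assms(2)] m nb f by auto
  qed
  ultimately show ?thesis by simp
qed

end

locale eha = mha +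
  assumes EHA: "epistemic_heyting_algebra A"
begin

lemma finC: "finite C" using EHA unfolding epistemic_heyting_algebra_def by blast
lemma excl: "a \<in> C \<Longrightarrow> jn (dia i a) (im (dia i a) bt) = tp"
  using EHA unfolding epistemic_heyting_algebra_def hneg_def by blast

lemma neg_dia_closed: "a \<in> C \<Longrightarrow> dia i (im (dia i a) bt) = im (dia i a) bt"
proof -
  assume a: "a \<in> C"
  let ?n = "im (dia i a) bt"
  have "le (dia i a) (box i (dia i a))" using dia_box_dia a by simp
  moreover have "le (dia i a) (im ?n bt)" using a le_imp_iff mp_le2 by simp
  hence "le (box i (dia i a)) (box i (im ?n bt))" using box_mono a by simp
  ultimately have "le (dia i a) (box i (im ?n bt))" using a trans by (meson box_in dia_in imp_in bot_in)
  moreover have "le (box i (im ?n bt)) (im (dia i ?n) (dia i bt))" using box_imp_dia[of ?n bt i] a by simp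
  ultimately have "le (dia i a) (im (dia i ?n) bt)" using a trans
    by (metis bot_in box_in dia_bot dia_in imp_in)
  hence "le (mt (dia i a) (dia i ?n)) bt" using a le_imp_iff by simp
  hence "le (dia i ?n) ?n" using a le_imp_iff meet_comm by simp
  thus ?thesis using a le_dia antisym by simp
qed

lemma ex_Min_below:
  assumes "x \<in> C" "dia i x = x" "x \<noteq> bt"
  shows "\<exists>t\<in>Min_i A i. le t x"
proof -
  let ?S = "{d\<in>C. dia i d = d \<and> d \<noteq> bt \<and> le d x}"
  obtain m where m: "m \<in> ?S" "\<forall>d\<in>?S. le d m \<longrightarrow> d = m"
    using ex_min[OF finC, of x ?S] assms by auto
  have "m \<in> Min_i A i"
    unfolding Min_i_def i_minimal_def
  proof (intro CollectI conjI ballI impI)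
    fix d assume d: "d \<in> C" "hlt A d m \<and> dia i d = d"
    show "d = bt"
    proof (rule ccontr)
      assume "d \<noteq> bt"
      hence "d \<in> ?S" using d m assms trans unfolding hlt_def by blast
      thus False using m d unfolding hlt_def by blast
    qed
  qed (use m in auto)
  thus ?thesis using m by blast
qed

end

locale inter = eha A for A :: "('a,'i) mha" +
  fixes E :: "'e set" and sim :: "'i \<Rightarrow> 'e \<Rightarrow> 'e \<Rightarrow> bool"
  assumes finE: "finite E"
    and sim_refl: "\<And>i e. e \<in> E \<Longrightarrow> sim i e e"
    and sim_sym: "\<And>i e e'. e \<in> E \<Longrightarrow> e' \<in> E \<Longrightarrow> sim i e e' \<Longrightarrow> sim i e' e"
    and sim_trans: "\<And>i e e' e''. e \<in> E \<Longrightarrow> e' \<in> E \<Longrightarrow> e'' \<in> E \<Longrightarrow> sim i e e' \<Longrightarrow> sim i e' e'' \<Longrightarrow> sim i e e''"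
begin

abbreviation "B \<equiv> inter_alg A E sim"

definition DJ :: "'i \<Rightarrow> ('e \<Rightarrow> 'a) \<Rightarrow> 'e \<Rightarrow> 'a" where
  "DJ i f e = bigjoin A {hdia A i (f e') | e'. e' \<in> E \<and> sim i e' e}"
definition BM :: "'i \<Rightarrow> ('e \<Rightarrow> 'a) \<Rightarrow> 'e \<Rightarrow> 'a" where
  "BM i f e = bigmeet A {hbox A i (f e') | e'. e' \<in> E \<and> sim i e' e}"

lemma B_simps:
  "hcar B = PiE E (\<lambda>_. C)"
  "hle B f g = (\<forall>e\<in>E. le (f e) (g e))"
  "hmeet B f g = restrict (\<lambda>e. mt (f e) (g e)) E"
  "hjoin B f g = restrict (\<lambda>e. jn (f e) (g e)) E"
  "himp B f g = restrict (\<lambda>e. im (f e) (g e)) E"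
  "hbot B = restrict (\<lambda>e. bt) E"
  "htop B = restrict (\<lambda>e. tp) E"
  "hdia B i f = restrict (DJ i f) E"
  "hbox B i f = restrict (BM i f) E"
  unfolding inter_alg_def DJ_def BM_def by (simp_all add: restrict_def)

lemma PiE_C: "f \<in> PiE E (\<lambda>_. C) \<Longrightarrow> e \<in> E \<Longrightarrow> f e \<in> C"
  by blast

lemma fin_cls: "finite {g e' | e'. e' \<in> E \<and> sim i e' e}"
proof -
  have "{g e' | e'. e' \<in> E \<and> sim i e' e} = g ` {e'\<in>E. sim i e' e}" by auto
  thus ?thesis using finE by simp
qed

lemma DJ:
  assumes "f \<in> PiE E (\<lambda>_. C)" "e \<in> E"
  shows "DJ i f e \<in> C" "\<And>e'. e' \<in> E \<Longrightarrow> sim i e' e \<Longrightarrow> le (dia i (f e')) (DJ i f e)"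
    "\<And>y. y \<in> C \<Longrightarrow> (\<forall>e'\<in>E. sim i e' e \<longrightarrow> le (dia i (f e')) y) \<Longrightarrow> le (DJ i f e) y"
proof -
  have sub: "{dia i (f e') | e'. e' \<in> E \<and> sim i e' e} \<subseteq> C" using assms by (auto intro!: dia_in box_in PiE_C)
  note bj = bigjoin[OF fin_cls sub]
  show "DJ i f e \<in> C" unfolding DJ_def using bj by blast
  show "\<And>e'. e' \<in> E \<Longrightarrow> sim i e' e \<Longrightarrow> le (dia i (f e')) (DJ i f e)"
    unfolding DJ_def using bj(2) by blast
  show "\<And>y. y \<in> C \<Longrightarrow> (\<forall>e'\<in>E. sim i e' e \<longrightarrow> le (dia i (f e')) y) \<Longrightarrow> le (DJ i f e) y"
    unfolding DJ_def using bj(3) by blast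
qed

lemma BM:
  assumes "f \<in> PiE E (\<lambda>_. C)" "e \<in> E"
  shows "BM i f e \<in> C" "\<And>e'. e' \<in> E \<Longrightarrow> sim i e' e \<Longrightarrow> le (BM i f e) (box i (f e'))"
    "\<And>y. y \<in> C \<Longrightarrow> (\<forall>e'\<in>E. sim i e' e \<longrightarrow> le y (box i (f e'))) \<Longrightarrow> le y (BM i f e)"
proof -
  have sub: "{box i (f e') | e'. e' \<in> E \<and> sim i e' e} \<subseteq> C" using assms by (auto intro!: dia_in box_in PiE_C)
  note bj = bigmeet[OF fin_cls sub]
  show "BM i f e \<in> C" unfolding BM_def using bj by blast
  show "\<And>e'. e' \<in> E \<Longrightarrow> sim i e' e \<Longrightarrow> le (BM i f e) (box i (f e'))"
    unfolding BM_def using bj(2) by blast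
  show "\<And>y. y \<in> C \<Longrightarrow> (\<forall>e'\<in>E. sim i e' e \<longrightarrow> le y (box i (f e'))) \<Longrightarrow> le y (BM i f e)"
    unfolding BM_def using bj(3) by blast
qed

lemma DJ_cls: "e \<in> E \<Longrightarrow> e2 \<in> E \<Longrightarrow> sim i e e2 \<Longrightarrow> DJ i f e = DJ i f e2"
proof -
  assume a: "e \<in> E" "e2 \<in> E" "sim i e e2"
  have "{dia i (f e') | e'. e' \<in> E \<and> sim i e' e} = {dia i (f e') | e'. e' \<in> E \<and> sim i e' e2}"
    using a sim_trans sim_sym by blast
  thus ?thesis unfolding DJ_def by simp
qed

lemma PiE_restrict: "(\<forall>e\<in>E. g e \<in> C) \<Longrightarrow> restrict g E \<in> PiE E (\<lambda>_. C)"
  by simp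

lemma HB: "heyting_algebra B"
  unfolding heyting_algebra_def B_simps
proof (intro conjI ballI impI allI)
  fix x y assume "x \<in> PiE E (\<lambda>_. C)" "y \<in> PiE E (\<lambda>_. C)"
    "(\<forall>e\<in>E. le (x e) (y e)) \<and> (\<forall>e\<in>E. le (y e) (x e))"
  thus "x = y" by (intro PiE_ext[of x E "\<lambda>_. C" y]) (auto intro: antisym)
next
  fix x y z assume xyz: "x \<in> PiE E (\<lambda>_. C)" "y \<in> PiE E (\<lambda>_. C)" "z \<in> PiE E (\<lambda>_. C)"
    "(\<forall>e\<in>E. le (x e) (y e)) \<and> (\<forall>e\<in>E. le (y e) (z e))"
  fix e assume "e \<in> E"
  thus "le (x e) (z e)" using trans[of "x e" "y e" "z e"] PiE_C xyz by blast
next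
  fix x y z assume xyz: "x \<in> PiE E (\<lambda>_. C)" "y \<in> PiE E (\<lambda>_. C)" "z \<in> PiE E (\<lambda>_. C)"
  show "(\<forall>e\<in>E. le (restrict (\<lambda>e. mt (z e) (x e)) E e) (y e)) =
        (\<forall>e\<in>E. le (z e) (restrict (\<lambda>e. im (x e) (y e)) E e))"
    using xyz le_imp_iff by (auto simp: PiE_C)
qed (auto simp: PiE_C intro: meet_le1I meet_le2I join_ge1I join_ge2I)

lemma dia_closed_DJ:
  assumes "f \<in> PiE E (\<lambda>_. C)" "e \<in> E"
  shows "dia i (DJ i f e) = DJ i f e" "le (DJ i f e) (box i (DJ i f e))"
proof -
  note d = DJ[OF assms, where i=i]
  have 1: "le (DJ i f e) (box i (DJ i f e))"
  proof (rule d(3))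
    show "box i (DJ i f e) \<in> C" using d by simp
    show "\<forall>e'\<in>E. sim i e' e \<longrightarrow> le (dia i (f e')) (box i (DJ i f e))"
    proof (intro ballI impI)
      fix e' assume e': "e' \<in> E" "sim i e' e"
      have fe: "f e' \<in> C" using assms e' by blast
      have "le (dia i (f e')) (box i (dia i (f e')))" using dia_box_dia fe by simp
      moreover have "le (box i (dia i (f e'))) (box i (DJ i f e))"
        using box_mono d(2)[OF e'] d(1) fe by simp
      ultimately show "le (dia i (f e')) (box i (DJ i f e))" using trans fe d(1) by simp
    qed
  qed
  have "le (dia i (DJ i f e)) (dia i (box i (DJ i f e)))" using dia_mono 1 d(1) by simp
  moreover have "le (dia i (box i (DJ i f e))) (box i (DJ i f e))" using dia_box d(1) by simp
  ultimately have "le (dia i (DJ i f e)) (box i (DJ i f e))" using trans d(1) by simp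
  hence "le (dia i (DJ i f e)) (DJ i f e)" using box_le[of "DJ i f e" i] trans d(1) by simp
  thus "dia i (DJ i f e) = DJ i f e" using antisym le_dia d(1) by simp
  show "le (DJ i f e) (box i (DJ i f e))" by (fact 1)
qed

lemma MB: "monadic_heyting_algebra B"
  unfolding monadic_heyting_algebra_def
proof (intro conjI HB allI ballI impI)
  fix i a assume a: "a \<in> hcar B"
  hence a': "a \<in> PiE E (\<lambda>_. C)" by (simp add: B_simps)
  show "hdia B i a \<in> hcar B" "hbox B i a \<in> hcar B"
    using DJ(1)[OF a'] BM(1)[OF a'] by (auto simp: B_simps)
  show "hle B a (hdia B i a)" unfolding B_simps
  proof
    fix e assume e: "e \<in> E"
    have "le (a e) (dia i (a e))" using le_dia a' e by blast
    moreover have "le (dia i (a e)) (DJ i a e)" using DJ(2)[OF a' e e] sim_refl e by simp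
    ultimately show "le (a e) (restrict (DJ i a) E e)" using e trans DJ(1)[OF a' e] a' by (simp add: PiE_C)
  qed
  show "hle B (hbox B i a) a" unfolding B_simps
  proof
    fix e assume e: "e \<in> E"
    have "le (box i (a e)) (a e)" using box_le a' e by blast
    moreover have "le (BM i a e) (box i (a e))" using BM(2)[OF a' e e] sim_refl e by simp
    ultimately show "le (restrict (BM i a) E e) (a e)" using e trans BM(1)[OF a' e] a' by (simp add: PiE_C)
  qed
  show "hle B (hdia B i a) (hbox B i (hdia B i a))" unfolding B_simps
  proof
    fix e assume e: "e \<in> E"
    let ?d = "restrict (DJ i a) E"
    have d': "?d \<in> PiE E (\<lambda>_. C)" using DJ(1)[OF a'] by simp
    have "le (DJ i a e) (BM i ?d e)"
    proof (rule BM(3)[OF d' e])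
      show "DJ i a e \<in> C" using DJ(1)[OF a' e] .
      show "\<forall>e'\<in>E. sim i e' e \<longrightarrow> le (DJ i a e) (box i (?d e'))"
        using dia_closed_DJ(2)[OF a' e] DJ_cls e by (metis restrict_apply')
    qed
    thus "le (?d e) (restrict (BM i ?d) E e)" using e by simp
  qed
  show "hle B (hdia B i (hbox B i a)) (hbox B i a)" unfolding B_simps
  proof
    fix e assume e: "e \<in> E"
    let ?b = "restrict (BM i a) E"
    have b': "?b \<in> PiE E (\<lambda>_. C)" using BM(1)[OF a'] by simp
    have "le (DJ i ?b e) (BM i a e)"
    proof (rule DJ(3)[OF b' e])
      show "BM i a e \<in> C" using BM(1)[OF a' e] .
      show "\<forall>e'\<in>E. sim i e' e \<longrightarrow> le (dia i (?b e')) (BM i a e)"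
      proof (intro ballI impI)
        fix e' assume e': "e' \<in> E" "sim i e' e"
        show "le (dia i (?b e')) (BM i a e)"
        proof (rule BM(3)[OF a' e])
          show "dia i (?b e') \<in> C" using BM(1)[OF a' e'(1)] e' by simp
          show "\<forall>e''\<in>E. sim i e'' e \<longrightarrow> le (dia i (?b e')) (box i (a e''))"
          proof (intro ballI impI)
            fix e'' assume e'': "e'' \<in> E" "sim i e'' e"
            have s: "sim i e'' e'" using e'' e' e sim_trans sim_sym by blast
            have ae: "a e'' \<in> C" using a' e'' by blast
            have "le (BM i a e') (box i (a e''))" using BM(2)[OF a' e'(1) e''(1) s] .
            hence "le (dia i (BM i a e')) (dia i (box i (a e'')))"
              using dia_mono BM(1)[OF a' e'(1)] ae by simp
            moreover have "le (dia i (box i (a e''))) (box i (a e''))" using dia_box ae by simp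
            ultimately show "le (dia i (?b e')) (box i (a e''))"
              using trans e' BM(1)[OF a' e'(1)] ae by simp
          qed
        qed
      qed
    qed
    thus "le (restrict (DJ i ?b) E e) (?b e)" using e by simp
  qed
next
  fix i
  show "hle B (htop B) (hbox B i (htop B))" unfolding B_simps
  proof
    fix e assume e: "e \<in> E"
    let ?t = "restrict (\<lambda>e. tp) E"
    have t': "?t \<in> PiE E (\<lambda>_. C)" by simp
    have "le tp (BM i ?t e)"
      by (rule BM(3)[OF t' e]) (use top_box_le in auto)
    thus "le (?t e) (restrict (BM i ?t) E e)" using e by simp
  qed
  show "hle B (hdia B i (hbot B)) (hbot B)" unfolding B_simps
  proof
    fix e assume e: "e \<in> E"
    let ?t = "restrict (\<lambda>e. bt) E"
    have t': "?t \<in> PiE E (\<lambda>_. C)" by simp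
    have "le (DJ i ?t e) bt"
      by (rule DJ(3)[OF t' e]) auto
    thus "le (restrict (DJ i ?t) E e) (?t e)" using e by simp
  qed
next
  fix i a b assume a: "a \<in> hcar B" and b: "b \<in> hcar B" and ab: "hle B a b"
  hence a': "a \<in> PiE E (\<lambda>_. C)" and b': "b \<in> PiE E (\<lambda>_. C)" by (simp_all add: B_simps)
  have ab': "\<And>e. e \<in> E \<Longrightarrow> le (a e) (b e)" using ab by (simp add: B_simps)
  show "hle B (hdia B i a) (hdia B i b)" unfolding B_simps
  proof
    fix e assume e: "e \<in> E"
    have "le (DJ i a e) (DJ i b e)"
    proof (rule DJ(3)[OF a' e])
      show "DJ i b e \<in> C" using DJ(1)[OF b' e] .
      show "\<forall>e'\<in>E. sim i e' e \<longrightarrow> le (dia i (a e')) (DJ i b e)"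
      proof (intro ballI impI)
        fix e' assume e': "e' \<in> E" "sim i e' e"
        have x: "a e' \<in> C" "b e' \<in> C" using a' b' e' by (auto simp: PiE_C)
        have "le (dia i (a e')) (dia i (b e'))" using dia_mono ab' e' x by simp
        thus "le (dia i (a e')) (DJ i b e)" using DJ(2)[OF b' e e'] trans DJ(1)[OF b' e] x by simp
      qed
    qed
    thus "le (restrict (DJ i a) E e) (restrict (DJ i b) E e)" using e by simp
  qed
  show "hle B (hbox B i a) (hbox B i b)" unfolding B_simps
  proof
    fix e assume e: "e \<in> E"
    have "le (BM i a e) (BM i b e)"
    proof (rule BM(3)[OF b' e])
      show "BM i a e \<in> C" using BM(1)[OF a' e] .
      show "\<forall>e'\<in>E. sim i e' e \<longrightarrow> le (BM i a e) (box i (b e'))"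
      proof (intro ballI impI)
        fix e' assume e': "e' \<in> E" "sim i e' e"
        have x: "a e' \<in> C" "b e' \<in> C" using a' b' e' by (auto simp: PiE_C)
        have "le (box i (a e')) (box i (b e'))" using box_mono ab' e' x by simp
        thus "le (BM i a e) (box i (b e'))" using BM(2)[OF a' e e'] trans BM(1)[OF a' e] x by simp
      qed
    qed
    thus "le (restrict (BM i a) E e) (restrict (BM i b) E e)" using e by simp
  qed
next
  fix i a b assume a: "a \<in> hcar B" and b: "b \<in> hcar B"
  hence a': "a \<in> PiE E (\<lambda>_. C)" and b': "b \<in> PiE E (\<lambda>_. C)" by (simp_all add: B_simps)
  let ?j = "restrict (\<lambda>e. jn (a e) (b e)) E"
  have j': "?j \<in> PiE E (\<lambda>_. C)" using a' b' by (simp add: PiE_C)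
  show "hle B (hdia B i (hjoin B a b)) (hjoin B (hdia B i a) (hdia B i b))" unfolding B_simps
  proof
    fix e assume e: "e \<in> E"
    have "le (DJ i ?j e) (jn (DJ i a e) (DJ i b e))"
    proof (rule DJ(3)[OF j' e])
      show "jn (DJ i a e) (DJ i b e) \<in> C" using DJ(1)[OF a' e] DJ(1)[OF b' e] by simp
      show "\<forall>e'\<in>E. sim i e' e \<longrightarrow> le (dia i (?j e')) (jn (DJ i a e) (DJ i b e))"
      proof (intro ballI impI)
        fix e' assume e': "e' \<in> E" "sim i e' e"
        have x: "a e' \<in> C" "b e' \<in> C" using a' b' e' by (auto simp: PiE_C)
        have "le (dia i (jn (a e') (b e'))) (jn (dia i (a e')) (dia i (b e')))" using dia_join x by simp
        moreover have "le (jn (dia i (a e')) (dia i (b e'))) (jn (DJ i a e) (DJ i b e))"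
          using join_mono DJ(2)[OF a' e e'] DJ(2)[OF b' e e'] DJ(1)[OF a' e] DJ(1)[OF b' e] x by simp
        ultimately show "le (dia i (?j e')) (jn (DJ i a e) (DJ i b e))"
          using e' trans x DJ(1)[OF a' e] DJ(1)[OF b' e] by simp
      qed
    qed
    thus "le (restrict (DJ i ?j) E e) (restrict (\<lambda>e. jn (restrict (DJ i a) E e) (restrict (DJ i b) E e)) E e)"
      using e by simp
  qed
  let ?m = "restrict (\<lambda>e. im (a e) (b e)) E"
  have m': "?m \<in> PiE E (\<lambda>_. C)" using a' b' by (simp add: PiE_C)
  show "hle B (hbox B i (himp B a b)) (himp B (hbox B i a) (hbox B i b))" unfolding B_simps
  proof
    fix e assume e: "e \<in> E"
    have c: "BM i ?m e \<in> C" "BM i a e \<in> C" "BM i b e \<in> C" using BM(1) a' b' m' e by blast+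
    have "le (mt (BM i ?m e) (BM i a e)) (BM i b e)"
    proof (rule BM(3)[OF b' e])
      show "mt (BM i ?m e) (BM i a e) \<in> C" using c by simp
      show "\<forall>e'\<in>E. sim i e' e \<longrightarrow> le (mt (BM i ?m e) (BM i a e)) (box i (b e'))"
      proof (intro ballI impI)
        fix e' assume e': "e' \<in> E" "sim i e' e"
        have x: "a e' \<in> C" "b e' \<in> C" using a' b' e' by (auto simp: PiE_C)
        have h1: "le (mt (BM i ?m e) (BM i a e)) (mt (box i (im (a e') (b e'))) (box i (a e')))"
          using meet_mono BM(2)[OF m' e e'] BM(2)[OF a' e e'] c x e' by simp
        have h2: "le (mt (box i (im (a e') (b e'))) (box i (a e'))) (box i (b e'))"
          using box_mp x by simp
        show "le (mt (BM i ?m e) (BM i a e)) (box i (b e'))" using trans[OF h1 h2] c x by simp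
      qed
    qed
    hence "le (BM i ?m e) (im (BM i a e) (BM i b e))" using le_imp_iff c by simp
    thus "le (restrict (BM i ?m) E e) (restrict (\<lambda>e. im (restrict (BM i a) E e) (restrict (BM i b) E e)) E e)"
      using e by simp
  qed
  show "hle B (hbox B i (himp B a b)) (himp B (hdia B i a) (hdia B i b))" unfolding B_simps
  proof
    fix e assume e: "e \<in> E"
    have c: "BM i ?m e \<in> C" "DJ i a e \<in> C" "DJ i b e \<in> C" using BM(1) DJ(1) a' b' m' e by blast+
    have "le (DJ i a e) (im (BM i ?m e) (DJ i b e))"
    proof (rule DJ(3)[OF a' e])
      show "im (BM i ?m e) (DJ i b e) \<in> C" using c by simp
      show "\<forall>e'\<in>E. sim i e' e \<longrightarrow> le (dia i (a e')) (im (BM i ?m e) (DJ i b e))"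
      proof (intro ballI impI)
        fix e' assume e': "e' \<in> E" "sim i e' e"
        have x: "a e' \<in> C" "b e' \<in> C" using a' b' e' by (auto simp: PiE_C)
        have "le (BM i ?m e) (box i (im (a e') (b e')))" using BM(2)[OF m' e e'] e' by simp
        moreover have "le (box i (im (a e') (b e'))) (im (dia i (a e')) (dia i (b e')))"
          using box_imp_dia x by simp
        ultimately have "le (BM i ?m e) (im (dia i (a e')) (dia i (b e')))" using trans c x by simp
        hence "le (mt (BM i ?m e) (dia i (a e'))) (dia i (b e'))" using le_imp_iff c x by simp
        hence "le (mt (BM i ?m e) (dia i (a e'))) (DJ i b e)"
          using DJ(2)[OF b' e e'] trans c x by simp
        hence "le (mt (dia i (a e')) (BM i ?m e)) (DJ i b e)" using meet_comm c x by simp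
        thus "le (dia i (a e')) (im (BM i ?m e) (DJ i b e))" using le_imp_iff c x by simp
      qed
    qed
    hence "le (mt (DJ i a e) (BM i ?m e)) (DJ i b e)" using le_imp_iff c by simp
    hence "le (BM i ?m e) (im (DJ i a e) (DJ i b e))" using le_imp_iff c meet_comm by simp
    thus "le (restrict (BM i ?m) E e) (restrict (\<lambda>e. im (restrict (DJ i a) E e) (restrict (DJ i b) E e)) E e)"
      using e by simp
  qed
qed

lemma EB: "epistemic_heyting_algebra B"
  unfolding epistemic_heyting_algebra_def
proof (intro conjI MB allI ballI)
  show "finite (hcar B)" unfolding B_simps using finE finC by (simp add: finite_PiE)
next
  fix i a assume a: "a \<in> hcar B"
  hence a': "a \<in> PiE E (\<lambda>_. C)" by (simp add: B_simps)
  show "hjoin B (hdia B i a) (hneg B (hdia B i a)) = htop B"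
    unfolding hneg_def B_simps
  proof (rule restrict_ext)
    fix e assume e: "e \<in> E"
    have "jn (dia i (DJ i a e)) (im (dia i (DJ i a e)) bt) = tp" using excl DJ(1)[OF a' e] by simp
    thus "jn (restrict (DJ i a) E e) (restrict (\<lambda>e. im (restrict (DJ i a) E e) (restrict (\<lambda>e. bt) E e)) E e) = tp"
      using e dia_closed_DJ(1)[OF a' e] by simp
  qed
qed

end

context ha begin
lemma imp_imp_dist: "a \<in> C \<Longrightarrow> b \<in> C \<Longrightarrow> c \<in> C \<Longrightarrow> le (im c (im a b)) (im (im c a) (im c b))"
proof -
  assume abc: "a \<in> C" "b \<in> C" "c \<in> C"
  let ?z = "im c (im a b)"
  let ?w = "mt (mt ?z (im c a)) c"
  have w: "?w \<in> C" using abc by simp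
  have 1: "le (mt ?z c) (im a b)" using mp_le abc by simp
  have 2: "le (mt (im c a) c) a" using mp_le abc by simp
  have 3: "le ?w (mt ?z c)" using abc by (auto intro: meet_le1I)
  have 4: "le ?w (mt (im c a) c)" using abc by (auto intro: meet_le1I meet_le2I)
  have "le ?w (im a b)" using trans[OF 3 1] abc by simp
  moreover have "le ?w a" using trans[OF 4 2] abc by simp
  ultimately have "le ?w (mt (im a b) a)" using abc by simp
  hence "le ?w b" using trans[OF _ mp_le[of a b]] abc by simp
  hence "le (mt ?z (im c a)) (im c b)" using abc le_imp_iff by simp
  thus ?thesis using abc le_imp_iff by simp
qed

lemma meet_c_distr: "a \<in> C \<Longrightarrow> b \<in> C \<Longrightarrow> c \<in> C \<Longrightarrow> mt (mt a b) c = mt (mt a c) (mt b c)"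
  by (rule antisym) (auto intro: meet_le1I meet_le2I)

lemma imp_c: "a \<in> C \<Longrightarrow> b \<in> C \<Longrightarrow> c \<in> C \<Longrightarrow> mt (im a b) c = mt (im (mt a c) (mt b c)) c"
proof (rule antisym)
  assume abc: "a \<in> C" "b \<in> C" "c \<in> C"
  show "le (mt (im a b) c) (mt (im (mt a c) (mt b c)) c)"
  proof -
    let ?w = "mt (mt (im a b) c) (mt a c)"
    have w1: "le ?w (mt (im a b) a)"
    proof -
      have "le ?w (im a b)" using abc meet_le1I[of "mt (im a b) c" "im a b" "mt a c"] by simp
      moreover have "le ?w a" using abc meet_le2I[of "mt a c" a "mt (im a b) c"] by simp
      ultimately show ?thesis using abc by simp
    qed
    have "le ?w b" using trans[OF w1 mp_le[of a b]] abc by simp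
    moreover have "le ?w c" using abc meet_le2I[of "mt a c" c "mt (im a b) c"] by simp
    ultimately have "le ?w (mt b c)" using abc by simp
    hence "le (mt (im a b) c) (im (mt a c) (mt b c))" using abc le_imp_iff by simp
    thus ?thesis using abc by simp
  qed
  show "le (mt (im (mt a c) (mt b c)) c) (mt (im a b) c)"
  proof -
    let ?i = "im (mt a c) (mt b c)"
    let ?z = "mt ?i c"
    have "le (mt ?z a) ?i" using abc meet_le1I[of ?z ?i a] by simp
    moreover have "le (mt ?z a) (mt a c)"
      using abc meet_le1I[of ?z c a] meet_le2[of ?z a] by simp
    ultimately have "le (mt ?z a) (mt ?i (mt a c))" using abc by simp
    hence "le (mt ?z a) (mt b c)" using trans[OF _ mp_le[of "mt a c" "mt b c"]] abc by simp
    hence "le (mt ?z a) b" using abc trans[OF _ meet_le1[of b c]] by simp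
    hence "le ?z (im a b)" using abc le_imp_iff by simp
    thus ?thesis using abc by simp
  qed
qed (auto)
end

locale pq = eha B for B :: "('b,'i) mha" +
  fixes c :: 'b
  assumes cC: "c \<in> C"
begin

abbreviation "Q \<equiv> pquot B c"
abbreviation "cls \<equiv> pq_cls B c"
definition v :: "'b set \<Rightarrow> 'b" where "v X = mt (pq_rep X) c"

lemma cls_mem: "x \<in> C \<Longrightarrow> x \<in> cls x"
  unfolding pq_cls_def by simp

lemma rep_in: "x \<in> C \<Longrightarrow> pq_rep (cls x) \<in> cls x"
  unfolding pq_rep_def using cls_mem by (metis someI_ex)

lemma v_cls: "x \<in> C \<Longrightarrow> v (cls x) = mt x c"
  using rep_in unfolding v_def pq_cls_def by blast

lemma rep_cls_c: "x \<in> C \<Longrightarrow> mt (pq_rep (cls x)) c = mt x c"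
  using v_cls unfolding v_def .

lemma rep_C: "x \<in> C \<Longrightarrow> pq_rep (cls x) \<in> C"
  using rep_in unfolding pq_cls_def by blast

lemma carQ: "hcar Q = cls ` C" unfolding pquot_def by simp

lemma cls_eq: "x \<in> C \<Longrightarrow> y \<in> C \<Longrightarrow> cls x = cls y \<longleftrightarrow> mt x c = mt y c"
proof
  assume a: "x \<in> C" "y \<in> C" "cls x = cls y"
  hence "x \<in> cls y" using cls_mem[OF a(1)] by simp
  thus "mt x c = mt y c" unfolding pq_cls_def by simp
qed (auto simp: pq_cls_def)

lemma inQ: "X \<in> hcar Q \<Longrightarrow> X = cls (pq_rep X) \<and> pq_rep X \<in> C"
proof -
  assume "X \<in> hcar Q"
  then obtain x where x: "x \<in> C" "X = cls x" using carQ by auto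
  have "pq_rep X \<in> C" using rep_C x by simp
  moreover have "mt (pq_rep X) c = mt x c" using v_cls x unfolding v_def by simp
  ultimately show ?thesis using x cls_eq by simp
qed

lemma clsQ[simp]: "x \<in> C \<Longrightarrow> cls x \<in> hcar Q" using carQ by simp

lemma v_in[simp]: "X \<in> hcar Q \<Longrightarrow> v X \<in> C"
  using inQ cC unfolding v_def by simp

lemma v_le_c[simp]: "X \<in> hcar Q \<Longrightarrow> le (v X) c"
  using inQ cC unfolding v_def by simp

lemma v_c[simp]: "X \<in> hcar Q \<Longrightarrow> mt (v X) c = v X"
  using v_le_c meet_absorb1 cC by simp

lemma eqQ: "X \<in> hcar Q \<Longrightarrow> Y \<in> hcar Q \<Longrightarrow> X = Y \<longleftrightarrow> v X = v Y"
  using inQ cls_eq unfolding v_def by metis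

lemma repC[simp]: "X \<in> hcar Q \<Longrightarrow> pq_rep X \<in> C" using inQ by blast

lemma leQ: "hle Q X Y = le (v X) (v Y)" unfolding pquot_def v_def by simp

lemma Q_defs:
  "hmeet Q X Y = cls (mt (pq_rep X) (pq_rep Y))"
  "hjoin Q X Y = cls (jn (pq_rep X) (pq_rep Y))"
  "himp Q X Y = cls (im (pq_rep X) (pq_rep Y))"
  "hbot Q = cls bt" "htop Q = cls tp"
  "hdia Q i X = cls (dia i (mt (pq_rep X) c))"
  "hbox Q i X = cls (box i (im c (pq_rep X)))"
  unfolding pquot_def by simp_all

lemma Q_ops_in[simp]:
  "X \<in> hcar Q \<Longrightarrow> Y \<in> hcar Q \<Longrightarrow> hmeet Q X Y \<in> hcar Q"
  "X \<in> hcar Q \<Longrightarrow> Y \<in> hcar Q \<Longrightarrow> hjoin Q X Y \<in> hcar Q"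
  "X \<in> hcar Q \<Longrightarrow> Y \<in> hcar Q \<Longrightarrow> himp Q X Y \<in> hcar Q"
  "hbot Q \<in> hcar Q" "htop Q \<in> hcar Q"
  "X \<in> hcar Q \<Longrightarrow> hdia Q i X \<in> hcar Q"
  "X \<in> hcar Q \<Longrightarrow> hbox Q i X \<in> hcar Q"
  unfolding Q_defs using cC by (simp_all del: carQ)

lemma v_ops[simp]:
  "X \<in> hcar Q \<Longrightarrow> Y \<in> hcar Q \<Longrightarrow> v (hmeet Q X Y) = mt (v X) (v Y)"
  "X \<in> hcar Q \<Longrightarrow> Y \<in> hcar Q \<Longrightarrow> v (hjoin Q X Y) = jn (v X) (v Y)"
  "X \<in> hcar Q \<Longrightarrow> Y \<in> hcar Q \<Longrightarrow> v (himp Q X Y) = mt (im (v X) (v Y)) c"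
  "v (hbot Q) = bt" "v (htop Q) = c"
  "X \<in> hcar Q \<Longrightarrow> v (hdia Q i X) = mt (dia i (v X)) c"
  "X \<in> hcar Q \<Longrightarrow> v (hbox Q i X) = mt (box i (im c (v X))) c"
proof -
  assume X: "X \<in> hcar Q"
  have x: "pq_rep X \<in> C" using X by simp
  show "v (hdia Q i X) = mt (dia i (v X)) c"
    unfolding Q_defs using x cC by (simp add: rep_cls_c v_def)
  have "im c (pq_rep X) = im c (v X)"
  proof (rule imp_congr_meet)
    show "mt c (pq_rep X) = mt c (v X)" unfolding v_def
      by (rule antisym) (use x cC in \<open>auto intro: meet_le1I meet_le2I\<close>)
  qed (use x cC v_in[OF X] in auto)
  thus "v (hbox Q i X) = mt (box i (im c (v X))) c"
    unfolding Q_defs using x cC v_in[OF X] by (simp add: v_cls)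
  assume Y: "Y \<in> hcar Q"
  have y: "pq_rep Y \<in> C" using Y by simp
  show "v (hmeet Q X Y) = mt (v X) (v Y)"
    unfolding Q_defs using x y cC by (simp add: rep_cls_c v_def meet_c_distr[of "pq_rep X" "pq_rep Y" c])
  show "v (hjoin Q X Y) = jn (v X) (v Y)"
    unfolding Q_defs using x y cC by (simp add: rep_cls_c v_def distrib2[of c "pq_rep X" "pq_rep Y"])
  show "v (himp Q X Y) = mt (im (v X) (v Y)) c"
    unfolding Q_defs using x y cC by (simp add: rep_cls_c v_def imp_c[of "pq_rep X" "pq_rep Y" c, symmetric])
next
  show "v (hbot Q) = bt" unfolding Q_defs using cC by (simp add: v_cls)
  show "v (htop Q) = c" unfolding Q_defs using cC by (simp add: v_cls)
qed

lemma HQ: "heyting_algebra Q"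
  unfolding heyting_algebra_def leQ
proof (intro conjI ballI impI Q_ops_in)
  fix X Y assume "X \<in> hcar Q" "Y \<in> hcar Q" "le (v X) (v Y) \<and> le (v Y) (v X)"
  thus "X = Y" using eqQ antisym by simp
next
  fix X Y Z assume "X \<in> hcar Q" "Y \<in> hcar Q" "Z \<in> hcar Q" "le (v X) (v Y) \<and> le (v Y) (v Z)"
  thus "le (v X) (v Z)" using trans by (meson v_in)
next
  fix X Y Z assume a: "X \<in> hcar Q" "Y \<in> hcar Q" "Z \<in> hcar Q"
  show "le (v (hmeet Q Z X)) (v Y) = le (v Z) (v (himp Q X Y))"
    using a cC by (simp add: le_imp_iff)
qed (simp_all add: cC)

end

context pq begin

lemma v_mem: "X \<in> hcar Q \<Longrightarrow> v X \<in> X"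
proof -
  assume X: "X \<in> hcar Q"
  have x: "pq_rep X \<in> C" "X = cls (pq_rep X)" using inQ[OF X] by auto
  have "mt (v X) c = mt (pq_rep X) c" using v_c[OF X] unfolding v_def .
  thus ?thesis using x v_in[OF X] unfolding pq_cls_def by auto
qed

lemma imp_cv: "a \<in> C \<Longrightarrow> im c (mt a c) = im c a"
proof (rule imp_congr_meet)
  assume a: "a \<in> C"
  show "mt c (mt a c) = mt c a"
    by (rule antisym) (use a cC in \<open>auto intro: meet_le1I meet_le2I\<close>)
qed (use cC in auto)

lemma Q_dia_mono: "X \<in> hcar Q \<Longrightarrow> Y \<in> hcar Q \<Longrightarrow> hle Q X Y \<Longrightarrow> hle Q (hdia Q i X) (hdia Q i Y)"
  unfolding leQ using cC dia_mono[of "v X" "v Y" i] by (simp add: meet_le1I)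

lemma Q_box_mono: "X \<in> hcar Q \<Longrightarrow> Y \<in> hcar Q \<Longrightarrow> hle Q X Y \<Longrightarrow> hle Q (hbox Q i X) (hbox Q i Y)"
  unfolding leQ using cC box_mono[of "im c (v X)" "im c (v Y)" i] imp_mono2[of "v X" "v Y" c]
  by (simp add: meet_le1I)

lemma Q_le_dia: "X \<in> hcar Q \<Longrightarrow> hle Q X (hdia Q i X)"
  unfolding leQ using cC le_dia[of "v X" i] by simp

lemma Q_box_le: "X \<in> hcar Q \<Longrightarrow> hle Q (hbox Q i X) X"
proof -
  assume X: "X \<in> hcar Q"
  let ?a = "v X"
  have a: "?a \<in> C" using X by simp
  have 1: "le (mt (box i (im c ?a)) c) (mt (im c ?a) c)"
    using a cC box_le[of "im c ?a" i] meet_le1I[of "box i (im c ?a)" "im c ?a" c] by simp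
  have 2: "le (mt (im c ?a) c) ?a" using mp_le a cC by simp
  show ?thesis unfolding leQ using X a cC trans[OF 1 2] by simp
qed

lemma Q_dia_join: "X \<in> hcar Q \<Longrightarrow> Y \<in> hcar Q \<Longrightarrow>
   hle Q (hdia Q i (hjoin Q X Y)) (hjoin Q (hdia Q i X) (hdia Q i Y))"
proof -
  assume X: "X \<in> hcar Q" and Y: "Y \<in> hcar Q"
  let ?a = "v X" and ?b = "v Y"
  have ab: "?a \<in> C" "?b \<in> C" using X Y by simp_all
  have 1: "le (mt (dia i (jn ?a ?b)) c) (mt (jn (dia i ?a) (dia i ?b)) c)"
    using ab cC dia_join[of ?a ?b i] meet_le1I[of "dia i (jn ?a ?b)" "jn (dia i ?a) (dia i ?b)" c] by simp
  have 2: "mt (jn (dia i ?a) (dia i ?b)) c = jn (mt (dia i ?a) c) (mt (dia i ?b) c)"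
    using distrib2 ab cC by simp
  show ?thesis unfolding leQ using X Y 1 2 by simp
qed

lemma Q_box_imp: "X \<in> hcar Q \<Longrightarrow> Y \<in> hcar Q \<Longrightarrow>
   hle Q (hbox Q i (himp Q X Y)) (himp Q (hbox Q i X) (hbox Q i Y))"
proof -
  assume X: "X \<in> hcar Q" and Y: "Y \<in> hcar Q"
  let ?a = "v X" and ?b = "v Y"
  have ab: "?a \<in> C" "?b \<in> C" using X Y by simp_all
  let ?u = "box i (im c (im ?a ?b))" and ?s = "box i (im c ?a)" and ?t = "box i (im c ?b)"
  have u: "?u \<in> C" "?s \<in> C" "?t \<in> C" using ab cC by simp_all
  have e: "im c (mt (im ?a ?b) c) = im c (im ?a ?b)" using imp_cv ab by simp
  have "le ?u (box i (im (im c ?a) (im c ?b)))"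
    using box_mono imp_imp_dist ab cC by simp
  hence "le (mt ?u ?s) (mt (box i (im (im c ?a) (im c ?b))) ?s)"
    using u ab cC meet_le1I by simp
  hence 1: "le (mt ?u ?s) ?t" using box_mp[of "im c ?a" "im c ?b" i] ab cC trans by (meson box_in imp_in meet_in)
  have 2: "le (mt (mt ?u c) (mt ?s c)) (mt ?u ?s)"
    using u cC meet_mono[OF meet_le1[of ?u c] meet_le1[of ?s c]] by simp
  have "le (mt (mt ?u c) (mt ?s c)) ?t" using trans[OF 2 1] u cC by simp
  moreover have "le (mt (mt ?u c) (mt ?s c)) c" using u cC meet_le2I by simp
  ultimately have "le (mt (mt ?u c) (mt ?s c)) (mt ?t c)" using u cC by simp
  hence "le (mt ?u c) (mt (im (mt ?s c) (mt ?t c)) c)" using u cC le_imp_iff by simp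
  thus ?thesis unfolding leQ using X Y e by simp
qed

lemma Q_dia_box_dia: "X \<in> hcar Q \<Longrightarrow> hle Q (hdia Q i X) (hbox Q i (hdia Q i X))"
proof -
  assume X: "X \<in> hcar Q"
  let ?a = "v X"
  have a: "?a \<in> C" using X by simp
  have e: "im c (mt (dia i ?a) c) = im c (dia i ?a)" using imp_cv a by simp
  have "le (dia i ?a) (im c (dia i ?a))" using a cC le_imp_iff by simp
  hence "le (box i (dia i ?a)) (box i (im c (dia i ?a)))" using box_mono a cC by simp
  hence "le (dia i ?a) (box i (im c (dia i ?a)))" using dia_box_dia[of ?a i] a cC trans by (meson box_in dia_in imp_in)
  hence "le (mt (dia i ?a) c) (mt (box i (im c (dia i ?a))) c)" using a cC meet_le1I by simp
  thus ?thesis unfolding leQ using X e by simp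
qed

lemma Q_dia_box: "X \<in> hcar Q \<Longrightarrow> hle Q (hdia Q i (hbox Q i X)) (hbox Q i X)"
proof -
  assume X: "X \<in> hcar Q"
  let ?a = "v X"
  have a: "?a \<in> C" using X by simp
  let ?s = "box i (im c ?a)"
  have s: "?s \<in> C" using a cC by simp
  have "le (dia i (mt ?s c)) (dia i ?s)" using dia_mono s cC by simp
  hence "le (dia i (mt ?s c)) ?s" using dia_box[of "im c ?a" i] trans s cC a by (meson dia_in meet_in imp_in)
  hence "le (mt (dia i (mt ?s c)) c) (mt ?s c)" using s cC meet_le1I by simp
  thus ?thesis unfolding leQ using X a s cC by simp
qed

lemma Q_box_imp_dia: "X \<in> hcar Q \<Longrightarrow> Y \<in> hcar Q \<Longrightarrow>
   hle Q (hbox Q i (himp Q X Y)) (himp Q (hdia Q i X) (hdia Q i Y))"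
proof -
  assume X: "X \<in> hcar Q" and Y: "Y \<in> hcar Q"
  let ?a = "v X" and ?b = "v Y"
  have ab: "?a \<in> C" "?b \<in> C" "le ?a c" using X Y by simp_all
  let ?P = "im c (im ?a ?b)"
  have P: "?P \<in> C" using ab cC by simp
  have e: "im c (mt (im ?a ?b) c) = ?P" using imp_cv ab by simp
  have "le ?P (im ?a ?b)"
  proof -
    have "le (mt ?P ?a) (mt (mt ?P c) ?a)"
      using P ab cC trans[of "mt ?P ?a" ?a c] by simp
    moreover have "le (mt (mt ?P c) ?a) (mt (im ?a ?b) ?a)"
      using mp_le[of c "im ?a ?b"] P ab cC meet_le1I by simp
    moreover have "le (mt (im ?a ?b) ?a) ?b" using mp_le ab by simp
    ultimately have "le (mt ?P ?a) ?b" using trans P ab cC by (meson meet_in imp_in)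
    thus ?thesis using le_imp_iff P ab by simp
  qed
  hence "le (box i ?P) (box i (im ?a ?b))" using box_mono P ab by simp
  hence "le (box i ?P) (im (dia i ?a) (dia i ?b))" using box_imp_dia[of ?a ?b i] trans P ab
    by (meson box_in dia_in imp_in)
  hence 1: "le (mt (box i ?P) (dia i ?a)) (dia i ?b)" using le_imp_iff P ab by simp
  let ?w = "mt (mt (box i ?P) c) (mt (dia i ?a) c)"
  have 2: "le ?w (mt (box i ?P) (dia i ?a))"
    using P ab cC meet_mono[OF meet_le1[of "box i ?P" c] meet_le1[of "dia i ?a" c]] by simp
  have "le ?w (dia i ?b)" using trans[OF 2 1] P ab cC by simp
  moreover have "le ?w c" using P ab cC meet_le2I by simp
  ultimately have "le ?w (mt (dia i ?b) c)" using P ab cC by simp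
  hence "le (mt (box i ?P) c) (mt (im (mt (dia i ?a) c) (mt (dia i ?b) c)) c)"
    using P ab cC le_imp_iff by simp
  thus ?thesis unfolding leQ using X Y e by simp
qed

lemma Q_dia_bot: "hle Q (hdia Q i (hbot Q)) (hbot Q)"
  unfolding leQ using cC by simp

lemma Q_top_box: "hle Q (htop Q) (hbox Q i (htop Q))"
proof -
  have "im c c = tp" using imp_top cC by simp
  moreover have "box i tp = tp" using top_box_le antisym box_le by simp
  ultimately show ?thesis unfolding leQ using cC by simp
qed

lemma MQ: "monadic_heyting_algebra Q"
  unfolding monadic_heyting_algebra_def
  apply (intro conjI HQ allI ballI impI)
  apply (rule Q_ops_in(6,7) Q_dia_mono Q_box_mono Q_le_dia Q_box_le Q_dia_join Q_box_imp
    Q_dia_box_dia Q_dia_box Q_box_imp_dia Q_dia_bot Q_top_box; assumption)+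
  done

lemma EQ: "epistemic_heyting_algebra Q"
  unfolding epistemic_heyting_algebra_def
proof (intro conjI MQ allI ballI)
  show "finite (hcar Q)" using finC carQ by simp
next
  fix i X assume X: "X \<in> hcar Q"
  let ?a = "v X"
  have a: "?a \<in> C" using X by simp
  let ?d = "mt (dia i ?a) c" and ?n = "im (dia i ?a) bt"
  have d: "?d \<in> C" "?n \<in> C" using a cC by simp_all
  have "jn (dia i ?a) ?n = tp" using excl a by simp
  hence "c = mt c (jn (dia i ?a) ?n)" using cC by simp
  also have "\<dots> = jn (mt c (dia i ?a)) (mt c ?n)" using distrib a cC by simp
  also have "\<dots> = jn ?d (mt ?n c)" using meet_comm a cC by simp
  finally have c1: "c = jn ?d (mt ?n c)" .
  have "le ?n (im ?d bt)"
  proof -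
    have "le (mt ?n ?d) (dia i ?a)" using d a cC meet_le2I[OF meet_le1[of "dia i ?a" c]] by simp
    hence "le (mt ?n ?d) (mt ?n (dia i ?a))" using d a cC by simp
    hence "le (mt ?n ?d) bt" using mp_le[of "dia i ?a" bt] a trans d by (metis bot_in dia_in meet_in)
    thus ?thesis using le_imp_iff d by simp
  qed
  hence "le (mt ?n c) (mt (im ?d bt) c)" using d cC meet_le1I by simp
  hence "le c (jn ?d (mt (im ?d bt) c))" using c1 d cC join_mono[of ?d ?d "mt ?n c" "mt (im ?d bt) c"]
    by (metis bot_in imp_in meet_in refl)
  hence "v (hjoin Q (hdia Q i X) (hneg Q (hdia Q i X))) = v (htop Q)"
    unfolding hneg_def using X d cC antisym by simp
  thus "hjoin Q (hdia Q i X) (hneg Q (hdia Q i X)) = htop Q"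
    using eqQ X unfolding hneg_def by simp
qed

lemma Min_Q_lift:
  assumes F: "F \<in> Min_i Q i"
  shows "\<exists>H\<in>Min_i B i. v F = mt H c"
proof -
  have F1: "F \<in> hcar Q" "F \<noteq> hbot Q" "hdia Q i F = F"
    "\<And>d. d \<in> hcar Q \<Longrightarrow> hlt Q d F \<Longrightarrow> hdia Q i d = d \<Longrightarrow> d = hbot Q"
    using F unfolding Min_i_def i_minimal_def by blast+
  let ?f = "v F"
  have f: "?f \<in> C" using F1 by simp
  have fnb: "?f \<noteq> bt" using F1(1,2) eqQ by force
  have fd: "mt (dia i ?f) c = ?f" using F1(1,3) by (metis v_ops(6))
  let ?G = "dia i ?f"
  have G: "?G \<in> C" using f by simp
  let ?S = "{H\<in>C. dia i H = H \<and> le H ?G \<and> mt H c \<noteq> bt}"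
  have GS: "?G \<in> ?S" using G f fd fnb by simp
  obtain H where H: "H \<in> ?S" "\<forall>d\<in>?S. le d H \<longrightarrow> d = H"
    using ex_min[OF finC GS] by blast
  have HC: "H \<in> C" "dia i H = H" "le H ?G" "mt H c \<noteq> bt" using H by auto
  have HMin: "H \<in> Min_i B i"
    unfolding Min_i_def i_minimal_def
  proof (intro CollectI conjI ballI impI)
    show "H \<in> C" "hdia B i H = H" using HC by auto
    show "H \<noteq> bt" using HC cC by auto
    fix d assume d: "d \<in> C" "hlt B d H \<and> hdia B i d = d"
    hence dH: "le d H" "d \<noteq> H" "dia i d = d" unfolding hlt_def by auto
    show "d = bt"
    proof (rule ccontr)
      assume dnb: "d \<noteq> bt"
      show False
      proof (cases "mt d c = bt")
        case False
        hence "d \<in> ?S" using d dH HC G trans by blast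
        thus False using H dH by blast
      next
        case True
        let ?n = "im d bt"
        have n: "?n \<in> C" using d by simp
        have ndia: "dia i ?n = ?n" using neg_dia_closed[OF d(1), of i] dH by simp
        let ?H' = "mt H ?n"
        have H'C: "?H' \<in> C" using n HC by simp
        have H'd: "dia i ?H' = ?H'" using dia_closed_meet[OF HC(1) n HC(2) ndia] .
        have cn: "le c ?n" using le_neg_iff d cC True meet_comm by simp
        have "mt ?H' c = mt H c"
        proof (rule antisym)
          show "le (mt ?H' c) (mt H c)" using H'C HC cC n meet_le1I by simp
          show "le (mt H c) (mt ?H' c)" using HC cC n cn trans[OF meet_le2[of H c] cn] by simp
        qed (use H'C HC cC in auto)
        hence "mt ?H' c \<noteq> bt" using HC by simp
        moreover have "le ?H' ?G" using trans[OF meet_le1[of H ?n] HC(3)] HC n G by simp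
        ultimately have "?H' \<in> ?S" using H'C H'd by simp
        moreover have "le ?H' H" using HC n by simp
        ultimately have eq: "?H' = H" using H by blast
        have "le d ?n" using dH(1) eq HC n d trans[of d H ?n] by (metis meet_le2)
        hence "mt d d = bt" using le_neg_iff d by simp
        thus False using dnb d by simp
      qed
    qed
  qed
  let ?D = "cls H"
  have D: "?D \<in> hcar Q" "v ?D = mt H c" using HC v_cls by auto
  have Dd: "hdia Q i ?D = ?D"
  proof -
    have "mt (dia i (mt H c)) c = mt H c"
    proof (rule antisym)
      have "le (dia i (mt H c)) H" using dia_mono[of "mt H c" H i] HC cC by simp
      thus "le (mt (dia i (mt H c)) c) (mt H c)" using HC cC meet_le1I by simp
      show "le (mt H c) (mt (dia i (mt H c)) c)" using le_dia HC cC by simp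
    qed (use HC cC in auto)
    thus ?thesis using eqQ D by simp
  qed
  have DF: "hle Q ?D F"
  proof -
    have "le (mt H c) (mt ?G c)" using HC G cC meet_le1I by simp
    thus ?thesis unfolding leQ using D fd by simp
  qed
  have Dnb: "?D \<noteq> hbot Q" using D HC eqQ by force
  have "?D = F"
  proof (rule ccontr)
    assume "?D \<noteq> F"
    hence "hlt Q ?D F" using DF unfolding hlt_def by simp
    thus False using F1(4)[OF D(1) _ Dd] Dnb by blast
  qed
  thus ?thesis using D HMin by auto
qed

end

locale mphi = eha A for A :: "('a,'i) mha" +
  fixes M :: "'a \<Rightarrow> real option" and i :: 'i and \<Phi> :: "('a \<times> nat) set"
  assumes meas: "i_measure A i M"
    and finPhi: "finite \<Phi>"
    and PhiC: "\<And>p. p \<in> \<Phi> \<Longrightarrow> fst p \<in> C"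
    and Phi_copies: "\<And>p m. p \<in> \<Phi> \<Longrightarrow> m < snd p \<Longrightarrow> (fst p, m) \<in> \<Phi>"
    and Phi_disj: "\<And>p q. p \<in> \<Phi> \<Longrightarrow> q \<in> \<Phi> \<Longrightarrow> fst p \<noteq> fst q \<Longrightarrow>
        mt (fst p) (fst q) = bt \<or> hlt A (fst p) (fst q) \<or> hlt A (fst q) (fst p)"
begin

abbreviation "Mv x \<equiv> the (M x)"
abbreviation "MD \<equiv> Min_down A i"

lemma MD_def': "x \<in> MD \<longleftrightarrow> x \<in> C \<and> (\<exists>t\<in>Min_i A i. le x t)"
  unfolding Min_down_def by blast

lemma pm: "i_premeasure A i M" using meas unfolding i_measure_def by blast

lemma dom_M: "dom M = MD" using pm unfolding i_premeasure_def by blast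

lemma M_nonneg: "x \<in> MD \<Longrightarrow> 0 \<le> Mv x"
  using pm dom_M unfolding i_premeasure_def by blast

lemma M_mono: "x \<in> MD \<Longrightarrow> y \<in> MD \<Longrightarrow> le x y \<Longrightarrow> Mv x \<le> Mv y"
  using pm dom_M unfolding i_premeasure_def by blast

lemma M_add: "t \<in> Min_i A i \<Longrightarrow> x \<in> C \<Longrightarrow> y \<in> C \<Longrightarrow> le x t \<Longrightarrow> le y t \<Longrightarrow>
    Mv (jn x y) = Mv x + Mv y - Mv (mt x y)"
  using pm unfolding i_premeasure_def by blast

lemma M_strict: "t \<in> Min_i A i \<Longrightarrow> x \<in> C \<Longrightarrow> y \<in> C \<Longrightarrow> hlt A x y \<Longrightarrow> le y t \<Longrightarrow> Mv x < Mv y"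
  using meas unfolding i_measure_def by blast

lemma M_one: "t \<in> Min_i A i \<Longrightarrow> M t = Some 1"
  using meas unfolding i_measure_def by blast

lemma M_bot: "t \<in> Min_i A i \<Longrightarrow> Mv bt = 0"
proof -
  assume t: "t \<in> Min_i A i"
  have tC: "t \<in> C" using t Min_iD by blast
  have "t \<in> MD" using t tC refl[OF tC] unfolding Min_down_def by blast
  hence "dom M \<noteq> {}" using dom_M by auto
  hence "M bt = Some 0" using pm unfolding i_premeasure_def by blast
  thus ?thesis by simp
qed

lemma MD_down: "x \<in> MD \<Longrightarrow> y \<in> C \<Longrightarrow> le y x \<Longrightarrow> y \<in> MD"
  unfolding Min_down_def using trans Min_iD by blast

lemma M_mw_disj:
  assumes t: "t \<in> Min_i A i" and w: "w \<in> C" "le w t" and z: "z1 \<in> C" "z2 \<in> C" "mt z1 z2 = bt"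
  shows "Mv (mt w (jn z1 z2)) = Mv (mt w z1) + Mv (mt w z2)"
proof -
  have tC: "t \<in> C" using t Min_iD by blast
  have l1: "le (mt w z1) t" "le (mt w z2) t" using w z tC trans[OF meet_le1 w(2)] by auto
  have "mt (mt w z1) (mt w z2) = bt"
  proof -
    have "le (mt (mt w z1) (mt w z2)) (mt z1 z2)" using w z meet_mono[OF meet_le2[of w z1] meet_le2[of w z2]] by simp
    thus ?thesis using z w le_bot_iff by simp
  qed
  moreover have "mt w (jn z1 z2) = jn (mt w z1) (mt w z2)" using distrib w z by simp
  ultimately show ?thesis using M_add[OF t _ _ l1] w z M_bot[OF t] by simp
qed

lemma sum_disj_aux:
  assumes t: "t \<in> Min_i A i" and fin: "finite Q" and a: "a \<in> C"
  shows "(\<forall>q\<in>Q. b q \<in> C \<and> le (b q) a) \<longrightarrow>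
    (\<forall>q\<in>Q. \<forall>q'\<in>Q. q \<noteq> q' \<longrightarrow> mt (b q) (b q') = bt) \<longrightarrow>
    (\<exists>j\<in>C. le j a \<and> (\<forall>w. w \<in> C \<longrightarrow> le w t \<longrightarrow> (\<Sum>q\<in>Q. Mv (mt w (b q))) = Mv (mt w j))
     \<and> (\<forall>z\<in>C. (\<forall>q\<in>Q. mt (b q) z = bt) \<longrightarrow> mt j z = bt))"
  using fin
proof (induction Q rule: finite_induct)
  case empty
  have e1: "\<forall>w. w \<in> C \<longrightarrow> le w t \<longrightarrow> (\<Sum>q\<in>{}. Mv (mt w (b q))) = Mv (mt w bt)"
    using M_bot[OF t] by simp
  have e2: "\<forall>z\<in>C. (\<forall>q\<in>{}. mt (b q) z = bt) \<longrightarrow> mt bt z = bt" by simp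
  have e3: "le bt a" using a by simp
  have X: "\<exists>j\<in>C. le j a \<and> (\<forall>w. w \<in> C \<longrightarrow> le w t \<longrightarrow> (\<Sum>q\<in>{}. Mv (mt w (b q))) = Mv (mt w j))
     \<and> (\<forall>z\<in>C. (\<forall>q\<in>{}. mt (b q) z = bt) \<longrightarrow> mt j z = bt)"
    by (rule bexI[of _ bt]) (use e1 e2 e3 in \<open>simp only: conj_assoc\<close>, simp)
  show ?case
  proof (intro impI)
    show "\<exists>j\<in>C. le j a \<and> (\<forall>w. w \<in> C \<longrightarrow> le w t \<longrightarrow> (\<Sum>q\<in>{}. Mv (mt w (b q))) = Mv (mt w j))
     \<and> (\<forall>z\<in>C. (\<forall>q\<in>{}. mt (b q) z = bt) \<longrightarrow> mt j z = bt)" by (fact X)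
  qed
next
  case (insert q1 Q1)
  show ?case
  proof (intro impI)
    assume p1: "\<forall>q\<in>insert q1 Q1. b q \<in> C \<and> le (b q) a"
      and p2: "\<forall>q\<in>insert q1 Q1. \<forall>q'\<in>insert q1 Q1. q \<noteq> q' \<longrightarrow> mt (b q) (b q') = bt"
    have p1': "\<forall>q\<in>Q1. b q \<in> C \<and> le (b q) a" using p1 by blast
    have p2': "\<forall>q\<in>Q1. \<forall>q'\<in>Q1. q \<noteq> q' \<longrightarrow> mt (b q) (b q') = bt" using p2 by blast
    have "\<exists>j\<in>C. le j a \<and> (\<forall>w. w \<in> C \<longrightarrow> le w t \<longrightarrow> (\<Sum>q\<in>Q1. Mv (mt w (b q))) = Mv (mt w j))
     \<and> (\<forall>z\<in>C. (\<forall>q\<in>Q1. mt (b q) z = bt) \<longrightarrow> mt j z = bt)"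
      using insert.IH[THEN mp, THEN mp, OF p1' p2'] .
    then obtain j where j: "j \<in> C" "le j a" "\<forall>w. w \<in> C \<longrightarrow> le w t \<longrightarrow> (\<Sum>q\<in>Q1. Mv (mt w (b q))) = Mv (mt w j)"
      "\<forall>z\<in>C. (\<forall>q\<in>Q1. mt (b q) z = bt) \<longrightarrow> mt j z = bt" by blast
    have bq1: "b q1 \<in> C" "le (b q1) a" using p1 by auto
    have jd: "mt j (b q1) = bt"
    proof -
      have "\<forall>q\<in>Q1. mt (b q) (b q1) = bt"
      proof
        fix q assume q: "q \<in> Q1"
        hence "q \<noteq> q1" using insert.hyps(2) by blast
        thus "mt (b q) (b q1) = bt" using p2 q by blast
      qed
      thus ?thesis using j(4) bq1 by blast
    qed
    show "\<exists>j\<in>C. le j a \<and> (\<forall>w. w \<in> C \<longrightarrow> le w t \<longrightarrow> (\<Sum>q\<in>insert q1 Q1. Mv (mt w (b q))) = Mv (mt w j))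
     \<and> (\<forall>z\<in>C. (\<forall>q\<in>insert q1 Q1. mt (b q) z = bt) \<longrightarrow> mt j z = bt)"
    proof (intro bexI[of _ "jn j (b q1)"] conjI allI impI ballI)
      show "jn j (b q1) \<in> C" "le (jn j (b q1)) a" using j bq1 a by auto
      fix w assume w: "w \<in> C" "le w t"
      have "(\<Sum>q\<in>insert q1 Q1. Mv (mt w (b q))) = Mv (mt w (b q1)) + Mv (mt w j)"
        using insert.hyps j(3) w by simp
      also have "\<dots> = Mv (mt w (jn j (b q1)))"
        using M_mw_disj[OF t w j(1) bq1(1) jd] by simp
      finally show "(\<Sum>q\<in>insert q1 Q1. Mv (mt w (b q))) = Mv (mt w (jn j (b q1)))" .
    next
      fix z assume z: "z \<in> C" "\<forall>q\<in>insert q1 Q1. mt (b q) z = bt"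
      have "mt j z = bt" using j(4) z by simp
      moreover have "mt (b q1) z = bt" using z by simp
      ultimately show "mt (jn j (b q1)) z = bt" using distrib2 j bq1 z by simp
    qed
  qed
qed

lemma sum_disj:
  assumes t: "t \<in> Min_i A i" and fin: "finite Q" and b: "\<And>q. q \<in> Q \<Longrightarrow> b q \<in> C"
    and ba: "\<And>q. q \<in> Q \<Longrightarrow> le (b q) a" and a: "a \<in> C"
    and disj: "\<And>q q'. q \<in> Q \<Longrightarrow> q' \<in> Q \<Longrightarrow> q \<noteq> q' \<Longrightarrow> mt (b q) (b q') = bt"
  shows "\<exists>j\<in>C. le j a \<and> (\<forall>w. w \<in> C \<longrightarrow> le w t \<longrightarrow> (\<Sum>q\<in>Q. Mv (mt w (b q))) = Mv (mt w j))"
  using sum_disj_aux[OF t fin a, of b] b ba disj by blast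

lemma MD_I: "t \<in> Min_i A i \<Longrightarrow> w \<in> C \<Longrightarrow> le w t \<Longrightarrow> w \<in> MD"
  unfolding Min_down_def by blast

lemma tC: "t \<in> Min_i A i \<Longrightarrow> t \<in> C" using Min_iD by blast

lemma phi_less_irrefl: "\<not> phi_less A p p"
  unfolding phi_less_def hlt_def by simp

lemma phi_less_trans: "p \<in> \<Phi> \<Longrightarrow> q \<in> \<Phi> \<Longrightarrow> r \<in> \<Phi> \<Longrightarrow> phi_less A p q \<Longrightarrow> phi_less A q r \<Longrightarrow> phi_less A p r"
proof -
  assume pqr: "p \<in> \<Phi>" "q \<in> \<Phi>" "r \<in> \<Phi>" and pq: "phi_less A p q" and qr: "phi_less A q r"
  have C3: "fst p \<in> C" "fst q \<in> C" "fst r \<in> C" using pqr PhiC by auto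
  show ?thesis
  proof (cases "hlt A (fst p) (fst q)")
    case True
    note pq' = this
    show ?thesis
    proof (cases "hlt A (fst q) (fst r)")
      case True
      have "le (fst p) (fst r)" using pq' True trans C3 unfolding hlt_def by blast
      moreover have "fst p \<noteq> fst r"
      proof
        assume "fst p = fst r"
        hence "le (fst q) (fst p)" using True by (simp add: hlt_def)
        thus False using pq' antisym C3 unfolding hlt_def by blast
      qed
      ultimately show ?thesis unfolding phi_less_def hlt_def by simp
    next
      case False
      hence "fst q = fst r" using qr unfolding phi_less_def by blast
      thus ?thesis using pq' unfolding phi_less_def by simp
    qed
  next
    case False
    hence pq': "fst p = fst q" "snd p < snd q" using pq unfolding phi_less_def by blast+
    thus ?thesis using qr unfolding phi_less_def by auto
  qed
qed

lemma phi_less_le: "p \<in> \<Phi> \<Longrightarrow> q \<in> \<Phi> \<Longrightarrow> phi_less A q p \<Longrightarrow> le (fst q) (fst p)"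
proof -
  assume a: "p \<in> \<Phi>" "q \<in> \<Phi>" "phi_less A q p"
  have "fst p \<in> C" using PhiC a by blast
  thus ?thesis using a unfolding phi_less_def hlt_def by auto
qed

lemma mb_sub: "mb A \<Phi> p \<subseteq> \<Phi>" unfolding mb_def by blast
lemma mb_less: "q \<in> mb A \<Phi> p \<Longrightarrow> phi_less A q p" unfolding mb_def by blast
lemma fin_mb: "finite (mb A \<Phi> p)" using finite_subset[OF mb_sub finPhi] .

lemma mb_le: "p \<in> \<Phi> \<Longrightarrow> q \<in> mb A \<Phi> p \<Longrightarrow> le (fst q) (fst p)"
  using phi_less_le mb_sub mb_less by blast

lemma mb_disj:
  assumes p: "p \<in> \<Phi>" and q: "q1 \<in> mb A \<Phi> p" "q2 \<in> mb A \<Phi> p" "q1 \<noteq> q2"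
  shows "mt (fst q1) (fst q2) = bt"
proof -
  have q': "q1 \<in> \<Phi>" "q2 \<in> \<Phi>" "phi_less A q1 p" "phi_less A q2 p"
    "\<not> phi_less A q1 q2" "\<not> phi_less A q2 q1"
    using q unfolding mb_def by blast+
  show ?thesis
  proof (cases "fst q1 = fst q2")
    case True
    hence "snd q1 \<noteq> snd q2" using q(3) by (simp add: prod_eq_iff)
    hence "snd q1 < snd q2 \<or> snd q2 < snd q1" by arith
    thus ?thesis using True q'(5,6) unfolding phi_less_def by auto
  next
    case False
    thus ?thesis using Phi_disj[OF q'(1,2)] q'(5,6) unfolding phi_less_def by blast
  qed
qed

lemma mb_join:
  assumes t: "t \<in> Min_i A i" and p: "p \<in> \<Phi>"
  shows "\<exists>j\<in>C. le j (fst p) \<and> (\<forall>w. w \<in> C \<longrightarrow> le w t \<longrightarrow>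
     (\<Sum>q\<in>mb A \<Phi> p. Mv (mt w (fst q))) = Mv (mt w j))"
proof (rule sum_disj[OF t fin_mb])
  show "\<And>q. q \<in> mb A \<Phi> p \<Longrightarrow> fst q \<in> C" using mb_sub PhiC by blast
  show "\<And>q. q \<in> mb A \<Phi> p \<Longrightarrow> le (fst q) (fst p)" using mb_le p by blast
  show "fst p \<in> C" using PhiC p .
  show "\<And>q q'. q \<in> mb A \<Phi> p \<Longrightarrow> q' \<in> mb A \<Phi> p \<Longrightarrow> q \<noteq> q' \<Longrightarrow> mt (fst q) (fst q') = bt"
    using mb_disj p by blast
qed

lemma delta_mono:
  assumes t: "t \<in> Min_i A i" and C: "x \<in> C" "y \<in> C" "z \<in> C" "z' \<in> C"
    and le: "le x y" "le y t" "le z z'"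
  shows "Mv (mt y z) - Mv (mt x z) \<le> Mv (mt y z') - Mv (mt x z')"
proof -
  have T: "t \<in> C" using tC[OF t] .
  have xt: "le x t" using trans[OF le(1,2)] C T by simp
  let ?u1 = "mt x z'" and ?u2 = "mt y z"
  have u: "?u1 \<in> C" "?u2 \<in> C" "le ?u1 t" "le ?u2 t"
    using C T xt le trans[OF meet_le1[of x z'] xt] trans[OF meet_le1[of y z] le(2)] by auto
  have m: "mt ?u1 ?u2 = mt x z"
  proof (rule antisym)
    show "le (mt ?u1 ?u2) (mt x z)" using C meet_mono[OF meet_le1[of x z'] meet_le2[of y z]] by simp
    have "le (mt x z) ?u1" using C le meet_mono[of x x z z'] by simp
    moreover have "le (mt x z) ?u2" using C le meet_mono[of x y z z] by simp
    ultimately show "le (mt x z) (mt ?u1 ?u2)" using C by simp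
  qed (use C in auto)
  have j: "le (jn ?u1 ?u2) (mt y z')"
  proof -
    have "le ?u1 (mt y z')" using C le meet_mono[of x y z' z'] by simp
    moreover have "le ?u2 (mt y z')" using C le meet_mono[of y y z z'] by simp
    ultimately show ?thesis using C by simp
  qed
  have "Mv (jn ?u1 ?u2) = Mv ?u1 + Mv ?u2 - Mv (mt x z)"
    using M_add[OF t u] m by simp
  moreover have "Mv (jn ?u1 ?u2) \<le> Mv (mt y z')"
  proof (rule M_mono[OF _ _ j])
    show "mt y z' \<in> MD" using MD_I[OF t] C trans[OF meet_le1[of y z'] le(2)] T by simp
    thus "jn ?u1 ?u2 \<in> MD" using MD_down j u by simp
  qed
  ultimately show ?thesis by simp
qed

lemma mua_mono:
  assumes t: "t \<in> Min_i A i" and p: "p \<in> \<Phi>" and C: "x \<in> C" "y \<in> C"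
    and le: "le x y" "le y t"
  shows "mu_a A M \<Phi> p x \<le> mu_a A M \<Phi> p y"
proof -
  have T: "t \<in> C" using tC[OF t] .
  have xt: "le x t" using trans[OF le(1,2)] C T by simp
  obtain j where j: "j \<in> C" "le j (fst p)" "\<forall>w. w \<in> C \<longrightarrow> le w t \<longrightarrow>
     (\<Sum>q\<in>mb A \<Phi> p. Mv (mt w (fst q))) = Mv (mt w j)" using mb_join[OF t p] by blast
  have "Mv (mt y j) - Mv (mt x j) \<le> Mv (mt y (fst p)) - Mv (mt x (fst p))"
    using delta_mono[OF t C j(1) PhiC[OF p] le j(2)] .
  thus ?thesis unfolding mu_a_def using j(3) C xt le by simp
qed

lemma mua_bot:
  assumes t: "t \<in> Min_i A i" and p: "p \<in> \<Phi>"
  shows "mu_a A M \<Phi> p bt = 0"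
proof -
  have "\<And>q. q \<in> mb A \<Phi> p \<Longrightarrow> Mv (mt bt (fst q)) = 0"
  proof -
    fix q assume "q \<in> mb A \<Phi> p"
    hence "fst q \<in> C" using mb_sub PhiC by blast
    thus "Mv (mt bt (fst q)) = 0" using M_bot[OF t] by simp
  qed
  thus ?thesis unfolding mu_a_def using M_bot[OF t] PhiC[OF p] by simp
qed

lemma M_modular:
  assumes t: "t \<in> Min_i A i" and C: "x \<in> C" "y \<in> C" "z \<in> C" and le: "le x t" "le y t"
  shows "Mv (mt (jn x y) z) = Mv (mt x z) + Mv (mt y z) - Mv (mt (mt x y) z)"
proof -
  have T: "t \<in> C" using tC[OF t] .
  have "mt (jn x y) z = jn (mt x z) (mt y z)" using distrib2 C by simp
  moreover have "mt (mt x z) (mt y z) = mt (mt x y) z" using meet_c_distr[of x y z] C by simp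
  moreover have "le (mt x z) t" "le (mt y z) t"
    using C T le trans[OF meet_le1[of x z] le(1)] trans[OF meet_le1[of y z] le(2)] by auto
  ultimately show ?thesis using M_add[OF t, of "mt x z" "mt y z"] C by simp
qed

lemma mua_modular:
  assumes t: "t \<in> Min_i A i" and p: "p \<in> \<Phi>" and C: "x \<in> C" "y \<in> C" and le: "le x t" "le y t"
  shows "mu_a A M \<Phi> p (jn x y) = mu_a A M \<Phi> p x + mu_a A M \<Phi> p y - mu_a A M \<Phi> p (mt x y)"
proof -
  have q: "\<And>q. q \<in> mb A \<Phi> p \<Longrightarrow> fst q \<in> C" using mb_sub PhiC by blast
  have s: "(\<Sum>q\<in>mb A \<Phi> p. Mv (mt (jn x y) (fst q))) =
     (\<Sum>q\<in>mb A \<Phi> p. Mv (mt x (fst q))) + (\<Sum>q\<in>mb A \<Phi> p. Mv (mt y (fst q)))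
      - (\<Sum>q\<in>mb A \<Phi> p. Mv (mt (mt x y) (fst q)))"
    using M_modular[OF t C _ le] q by (simp add: sum.distrib sum_subtractf)
  show ?thesis unfolding mu_a_def using M_modular[OF t C PhiC[OF p] le] s by simp
qed

lemma mua_strict:
  assumes t: "t \<in> Min_i A i" and p: "p \<in> \<Phi>" and C: "x \<in> C" "y \<in> C" and le: "le x y" "le y t"
    and eq: "\<forall>q\<in>mb A \<Phi> p. mt x (fst q) = mt y (fst q)"
    and ne: "mt x (fst p) \<noteq> mt y (fst p)"
  shows "mu_a A M \<Phi> p x < mu_a A M \<Phi> p y"
proof -
  have T: "t \<in> C" using tC[OF t] .
  have a: "fst p \<in> C" using PhiC p by simp
  have "hlt A (mt x (fst p)) (mt y (fst p))" unfolding hlt_def using ne C a le meet_mono[of x y "fst p" "fst p"] by simp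
  moreover have "le (mt y (fst p)) t" using trans[OF meet_le1[of y "fst p"] le(2)] C a T by simp
  ultimately have "Mv (mt x (fst p)) < Mv (mt y (fst p))" using M_strict[OF t] C a by simp
  moreover have "(\<Sum>q\<in>mb A \<Phi> p. Mv (mt x (fst q))) = (\<Sum>q\<in>mb A \<Phi> p. Mv (mt y (fst q)))"
    using eq by simp
  ultimately show ?thesis unfolding mu_a_def by simp
qed

lemma mua_absorb:
  assumes p: "p \<in> \<Phi>" and C: "x \<in> C" "c0 \<in> C" and pc: "le (fst p) c0"
  shows "mu_a A M \<Phi> p (mt x c0) = mu_a A M \<Phi> p x"
proof -
  have ab: "\<And>b. b \<in> C \<Longrightarrow> le b c0 \<Longrightarrow> mt (mt x c0) b = mt x b"
  proof -
    fix b assume b: "b \<in> C" "le b c0"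
    show "mt (mt x c0) b = mt x b"
      by (rule antisym) (use b C trans[OF meet_le2[of x b] b(2)] in \<open>auto intro: meet_le1I\<close>)
  qed
  have a: "fst p \<in> C" using PhiC p by simp
  have "\<And>q. q \<in> mb A \<Phi> p \<Longrightarrow> mt (mt x c0) (fst q) = mt x (fst q)"
  proof -
    fix q assume q: "q \<in> mb A \<Phi> p"
    have "fst q \<in> C" using q mb_sub PhiC by blast
    moreover have "le (fst q) c0" using trans[OF mb_le[OF p q] pc] calculation a C by simp
    ultimately show "mt (mt x c0) (fst q) = mt x (fst q)" using ab by simp
  qed
  thus ?thesis unfolding mu_a_def using ab[OF a pc] by simp
qed

end

locale setting =
  fixes A :: "('a,'i) mha" and \<mu> :: "'i \<Rightarrow> 'a \<Rightarrow> real option"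
    and E :: "'e set" and sim :: "'i \<Rightarrow> 'e \<Rightarrow> 'e \<Rightarrow> bool" and P :: "'i \<Rightarrow> 'e \<Rightarrow> real"
    and \<Phi> :: "('a \<times> nat) set" and pre :: "'e \<Rightarrow> ('a \<times> nat) \<Rightarrow> real"
  assumes ape: "APE_structure A \<mu>"
    and pes: "prob_event_structure A E sim P \<Phi> pre"

lemma (in setting) EA: "epistemic_heyting_algebra A" using ape unfolding APE_structure_def by blast

sublocale setting \<subseteq> inter A E sim
proof -
  have e: "epistemic_heyting_algebra A" by (rule EA)
  hence m: "monadic_heyting_algebra A" unfolding epistemic_heyting_algebra_def by blast
  hence h: "heyting_algebra A" unfolding monadic_heyting_algebra_def by blast
  have pe: "finite E" "\<forall>i. (\<forall>e\<in>E. sim i e e) \<and> (\<forall>e\<in>E. \<forall>e'\<in>E. sim i e e' \<longrightarrow> sim i e' e) \<and>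
          (\<forall>e\<in>E. \<forall>e'\<in>E. \<forall>e''\<in>E. sim i e e' \<and> sim i e' e'' \<longrightarrow> sim i e e'')"
    using pes unfolding prob_event_structure_def by blast+
  show "inter A E sim"
  proof (unfold_locales)
    show "heyting_algebra A" by (rule h)
    show "monadic_heyting_algebra A" by (rule m)
    show "epistemic_heyting_algebra A" by (rule e)
    show "finite E" by (rule pe(1))
    show "\<And>i e. e \<in> E \<Longrightarrow> sim i e e" using pe(2) by blast
    show "\<And>i e e'. e \<in> E \<Longrightarrow> e' \<in> E \<Longrightarrow> sim i e e' \<Longrightarrow> sim i e' e" using pe(2) by blast
    show "\<And>i e e' e''. e \<in> E \<Longrightarrow> e' \<in> E \<Longrightarrow> e'' \<in> E \<Longrightarrow> sim i e e' \<Longrightarrow> sim i e' e'' \<Longrightarrow> sim i e e''"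
      using pe(2) by blast
  qed
qed

context setting begin

lemmas PES = pes[unfolded prob_event_structure_def]
lemma Enonempty: "E \<noteq> {}" using PES by blast
lemma P_pos: "e \<in> E \<Longrightarrow> 0 < P i e" using PES by blast
lemma finPhi: "finite \<Phi>" using PES by blast
lemma PhiC: "p \<in> \<Phi> \<Longrightarrow> fst p \<in> C" using PES by blast
lemma Phi_copies: "p \<in> \<Phi> \<Longrightarrow> m < snd p \<Longrightarrow> (fst p, m) \<in> \<Phi>" using PES by blast
lemma Phi_disj: "p \<in> \<Phi> \<Longrightarrow> q \<in> \<Phi> \<Longrightarrow> fst p \<noteq> fst q \<Longrightarrow>
        mt (fst p) (fst q) = bt \<or> hlt A (fst p) (fst q) \<or> hlt A (fst q) (fst p)" using PES by blast
lemma pre_nonneg: "p \<in> \<Phi> \<Longrightarrow> e \<in> E \<Longrightarrow> 0 \<le> pre e p" using PES by blast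
lemma pre_zero: "p \<in> \<Phi> \<Longrightarrow> q \<in> \<Phi> \<Longrightarrow> phi_less A p q \<Longrightarrow> e \<in> E \<Longrightarrow> pre e p = 0 \<Longrightarrow> pre e q = 0"
  using PES by blast

lemma meas: "i_measure A i (\<mu> i)" using ape unfolding APE_structure_def by blast

lemma mphi: "mphi A (\<mu> i) i \<Phi>"
  unfolding mphi_def mphi_axioms_def
  using eha_axioms meas finPhi PhiC Phi_copies Phi_disj by blast

abbreviation "c0 \<equiv> prebar A E \<Phi> pre"

definition PS :: "'e \<Rightarrow> 'a set" where "PS e = {fst p | p. p \<in> \<Phi> \<and> pre e p \<noteq> 0}"

lemma PS_fin: "finite (PS e)"
proof -
  have "PS e = fst ` {p\<in>\<Phi>. pre e p \<noteq> 0}" unfolding PS_def by (auto simp: image_iff)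
  thus ?thesis using finPhi by simp
qed
lemma PS_C: "PS e \<subseteq> C" unfolding PS_def using PhiC by auto

lemma c0_simp: "e \<in> E \<Longrightarrow> c0 e = bigjoin A (PS e)"
  unfolding prebar_def PS_def by simp

lemma c0_in: "c0 \<in> hcar B"
  unfolding B_simps prebar_def using bigjoin(1)[OF PS_fin PS_C] unfolding PS_def by simp

lemma c0_ub: "e \<in> E \<Longrightarrow> p \<in> \<Phi> \<Longrightarrow> pre e p \<noteq> 0 \<Longrightarrow> le (fst p) (c0 e)"
proof -
  assume a: "e \<in> E" "p \<in> \<Phi>" "pre e p \<noteq> 0"
  have "fst p \<in> PS e" unfolding PS_def using a by blast
  thus ?thesis using bigjoin(2)[OF PS_fin PS_C] c0_simp[OF a(1)] by simp
qed

lemma c0_lub: "e \<in> E \<Longrightarrow> y \<in> C \<Longrightarrow> (\<forall>p\<in>\<Phi>. pre e p \<noteq> 0 \<longrightarrow> le (fst p) y) \<Longrightarrow> le (c0 e) y"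
proof -
  assume a: "e \<in> E" "y \<in> C" "\<forall>p\<in>\<Phi>. pre e p \<noteq> 0 \<longrightarrow> le (fst p) y"
  have "\<forall>s\<in>PS e. le s y" unfolding PS_def using a(3) by blast
  thus ?thesis using bigjoin(3)[OF PS_fin PS_C a(2)] c0_simp[OF a(1)] by simp
qed

lemma eB: "eha B"
  unfolding eha_def mha_def ha_def eha_axioms_def mha_axioms_def using HB MB EB by blast

end

sublocale setting \<subseteq> Q: pq "inter_alg A E sim" "prebar A E \<Phi> pre"
  unfolding pq_def pq_axioms_def using eB c0_in by blast


context setting begin

lemma Min_B_D:
  assumes H: "H \<in> Min_i B i"
  shows "H \<in> PiE E (\<lambda>_. C)" "H \<noteq> restrict (\<lambda>e. bt) E" "\<And>e. e \<in> E \<Longrightarrow> DJ i H e = H e"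
    "\<And>d. d \<in> PiE E (\<lambda>_. C) \<Longrightarrow> hle B d H \<Longrightarrow> d \<noteq> H \<Longrightarrow> restrict (DJ i d) E = d \<Longrightarrow> d = restrict (\<lambda>e. bt) E"
proof -
  have H1: "H \<in> hcar B" "H \<noteq> hbot B" "hdia B i H = H"
    "\<And>d. d \<in> hcar B \<Longrightarrow> hlt B d H \<Longrightarrow> hdia B i d = d \<Longrightarrow> d = hbot B"
    using H unfolding Min_i_def i_minimal_def by blast+
  show "H \<in> PiE E (\<lambda>_. C)" "H \<noteq> restrict (\<lambda>e. bt) E" using H1 by (simp_all add: B_simps)
  show "\<And>e. e \<in> E \<Longrightarrow> DJ i H e = H e"
  proof -
    fix e assume e: "e \<in> E"
    have "restrict (DJ i H) E e = H e" using H1(3) by (simp add: B_simps)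
    thus "DJ i H e = H e" using e by simp
  qed
  show "\<And>d. d \<in> PiE E (\<lambda>_. C) \<Longrightarrow> hle B d H \<Longrightarrow> d \<noteq> H \<Longrightarrow> restrict (DJ i d) E = d \<Longrightarrow> d = restrict (\<lambda>e. bt) E"
    using H1(4) unfolding hlt_def by (simp add: B_simps)
qed

lemma Min_B_point:
  assumes H: "H \<in> Min_i B i" and e0: "e0 \<in> E" and nz: "H e0 \<noteq> bt"
  shows "H e0 \<in> Min_i A i"
proof -
  note HD = Min_B_D[OF H]
  have He0: "H e0 \<in> C" using HD(1) e0 by blast
  have dc: "dia i (H e0) = H e0" using dia_closed_DJ(1)[OF HD(1) e0, of i] HD(3)[OF e0] by simp
  obtain a where a: "a \<in> Min_i A i" "le a (H e0)" using ex_Min_below[OF He0 dc nz] by blast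
  have aC: "a \<in> C" "dia i a = a" "a \<noteq> bt" using Min_iD[OF a(1)] by auto
  define D where "D = restrict (\<lambda>e. if sim i e e0 then a else bt) E"
  have DP: "D \<in> PiE E (\<lambda>_. C)" unfolding D_def using aC by simp
  have DJD: "\<And>e. e \<in> E \<Longrightarrow> DJ i D e = D e"
  proof -
    fix e assume e: "e \<in> E"
    show "DJ i D e = D e"
    proof (cases "sim i e e0")
      case True
      have "le (DJ i D e) a"
      proof (rule DJ(3)[OF DP e])
        show "a \<in> C" using aC by simp
        show "\<forall>e'\<in>E. sim i e' e \<longrightarrow> le (dia i (D e')) a"
          unfolding D_def using aC by auto
      qed
      moreover have "le (dia i (D e)) (DJ i D e)" using DJ(2)[OF DP e e] sim_refl e by simp
      hence "le a (DJ i D e)" unfolding D_def using e True aC by simp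
      ultimately show ?thesis using antisym aC DJ(1)[OF DP e] True e unfolding D_def by simp
    next
      case False
      have "le (DJ i D e) bt"
      proof (rule DJ(3)[OF DP e])
        show "bt \<in> C" by simp
        show "\<forall>e'\<in>E. sim i e' e \<longrightarrow> le (dia i (D e')) bt"
        proof (intro ballI impI)
          fix e' assume e': "e' \<in> E" "sim i e' e"
          have "\<not> sim i e' e0"
          proof
            assume "sim i e' e0"
            hence "sim i e e0" using sim_trans[OF e e'(1) e0] sim_sym[OF e'(1) e e'(2)] by blast
            thus False using False by simp
          qed
          thus "le (dia i (D e')) bt" unfolding D_def using e' by simp
        qed
      qed
      thus ?thesis using le_bot_iff DJ(1)[OF DP e] False e unfolding D_def by simp
    qed
  qed
  have Dfix: "restrict (DJ i D) E = D"
  proof -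
    have "restrict (DJ i D) E = restrict D E" by (rule restrict_ext) (use DJD in simp)
    also have "\<dots> = D" unfolding D_def by simp
    finally show ?thesis .
  qed
  have DH: "hle B D H"
    unfolding B_simps
  proof
    fix e assume e: "e \<in> E"
    show "le (D e) (H e)"
    proof (cases "sim i e e0")
      case True
      have "H e = H e0" using HD(3)[OF e] HD(3)[OF e0] DJ_cls[OF e e0 True] by simp
      thus ?thesis unfolding D_def using True e a by simp
    next
      case False
      thus ?thesis unfolding D_def using e HD(1) by (simp add: PiE_C)
    qed
  qed
  have Dnb: "D \<noteq> restrict (\<lambda>e. bt) E"
  proof
    assume "D = restrict (\<lambda>e. bt) E"
    hence "D e0 = bt" using e0 by simp
    thus False unfolding D_def using e0 sim_refl aC by simp
  qed
  have "D = H" using HD(4)[OF DP DH _ Dfix] Dnb by blast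
  hence "H e0 = D e0" by simp
  hence "H e0 = a" unfolding D_def using e0 sim_refl[OF e0, of i] by simp
  thus ?thesis using a by simp
qed

lemma Min_B_MD:
  assumes H: "H \<in> Min_i B i" and e: "e \<in> E"
  shows "\<exists>t\<in>Min_i A i. le (H e) t"
proof (cases "H e = bt")
  case False
  thus ?thesis using Min_B_point[OF H e] Min_iD refl by blast
next
  case True
  note HD = Min_B_D[OF H]
  obtain e1 where e1: "e1 \<in> E" "H e1 \<noteq> bt"
  proof (rule ccontr)
    assume "\<not> thesis"
    hence "\<forall>e1\<in>E. H e1 = bt" using that by blast
    hence "H = restrict (\<lambda>e. bt) E" using HD(1) by (intro PiE_ext[of H E "\<lambda>_. C"]) auto
    thus False using HD(2) by simp
  qed
  have "H e1 \<in> Min_i A i" using Min_B_point[OF H e1] .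
  thus ?thesis using True Min_iD by auto
qed

end


context setting begin

definition S :: "'i \<Rightarrow> ('e \<Rightarrow> 'a) \<Rightarrow> real" where
  "S i f = (\<Sum>e\<in>E. \<Sum>p\<in>\<Phi>. P i e * mu_a A (\<mu> i) \<Phi> p (f e) * pre e p)"

lemma mu_inter_eq: "mu_inter A \<mu> E sim P \<Phi> pre i f = (if f \<in> Min_down B i then Some (S i f) else None)"
  unfolding mu_inter_def S_def by simp

lemma bnd:
  assumes H: "H \<in> Min_i B i" and f: "f \<in> hcar B" "hle B f H" and e: "e \<in> E"
  shows "\<exists>t\<in>Min_i A i. f e \<in> C \<and> le (f e) t"
proof -
  obtain t where t: "t \<in> Min_i A i" "le (H e) t" using Min_B_MD[OF H e] by blast
  have "H e \<in> C" using Min_B_D(1)[OF H] e by blast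
  moreover have "f e \<in> C" "le (f e) (H e)" using f e by (auto simp: B_simps)
  ultimately show ?thesis using t trans Min_iD by blast
qed

lemma S_mono:
  assumes H: "H \<in> Min_i B i" and f: "f \<in> hcar B" and g: "g \<in> hcar B" "hle B g H" and fg: "hle B f g"
  shows "S i f \<le> S i g"
  unfolding S_def
proof (intro sum_mono)
  interpret M: mphi A "\<mu> i" i \<Phi> by (rule mphi)
  fix e p assume e: "e \<in> E" and p: "p \<in> \<Phi>"
  obtain t where t: "t \<in> Min_i A i" "g e \<in> C" "le (g e) t" using bnd[OF H g e] by blast
  have fe: "f e \<in> C" "le (f e) (g e)" using f fg e by (auto simp: B_simps)
  have "mu_a A (\<mu> i) \<Phi> p (f e) \<le> mu_a A (\<mu> i) \<Phi> p (g e)"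
    using M.mua_mono[OF t(1) p fe(1) t(2) fe(2) t(3)] .
  thus "P i e * mu_a A (\<mu> i) \<Phi> p (f e) * pre e p \<le> P i e * mu_a A (\<mu> i) \<Phi> p (g e) * pre e p"
    using P_pos[OF e, of i] pre_nonneg[OF p e] by (simp add: mult_left_mono mult_right_mono)
qed

lemma S_bot:
  assumes H: "H \<in> Min_i B i"
  shows "S i (hbot B) = 0"
proof -
  interpret M: mphi A "\<mu> i" i \<Phi> by (rule mphi)
  obtain e where e: "e \<in> E" using Enonempty by blast
  obtain t where t: "t \<in> Min_i A i" using Min_B_MD[OF H e] by blast
  show ?thesis unfolding S_def B_simps using M.mua_bot[OF t] by simp
qed

lemma S_modular:
  assumes H: "H \<in> Min_i B i" and f: "f \<in> hcar B" "hle B f H" and g: "g \<in> hcar B" "hle B g H"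
  shows "S i (hjoin B f g) = S i f + S i g - S i (hmeet B f g)"
proof -
  interpret M: mphi A "\<mu> i" i \<Phi> by (rule mphi)
  have "\<And>e p. e \<in> E \<Longrightarrow> p \<in> \<Phi> \<Longrightarrow> P i e * mu_a A (\<mu> i) \<Phi> p (hjoin B f g e) * pre e p =
     P i e * mu_a A (\<mu> i) \<Phi> p (f e) * pre e p + P i e * mu_a A (\<mu> i) \<Phi> p (g e) * pre e p
     - P i e * mu_a A (\<mu> i) \<Phi> p (hmeet B f g e) * pre e p"
  proof -
    fix e p assume e: "e \<in> E" and p: "p \<in> \<Phi>"
    obtain t where t: "t \<in> Min_i A i" "le (H e) t" using Min_B_MD[OF H e] by blast
    have HC: "H e \<in> C" using Min_B_D(1)[OF H] e by blast
    have fe: "f e \<in> C" "le (f e) (H e)" "g e \<in> C" "le (g e) (H e)" using f g e by (auto simp: B_simps)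
    have le: "le (f e) t" "le (g e) t" using fe t HC trans Min_iD by blast+
    have "mu_a A (\<mu> i) \<Phi> p (jn (f e) (g e)) = mu_a A (\<mu> i) \<Phi> p (f e) + mu_a A (\<mu> i) \<Phi> p (g e)
       - mu_a A (\<mu> i) \<Phi> p (mt (f e) (g e))"
      using M.mua_modular[OF t(1) p fe(1) fe(3) le] .
    moreover have "hjoin B f g e = jn (f e) (g e)" "hmeet B f g e = mt (f e) (g e)" using e by (simp_all add: B_simps)
    ultimately show "P i e * mu_a A (\<mu> i) \<Phi> p (hjoin B f g e) * pre e p =
     P i e * mu_a A (\<mu> i) \<Phi> p (f e) * pre e p + P i e * mu_a A (\<mu> i) \<Phi> p (g e) * pre e p
     - P i e * mu_a A (\<mu> i) \<Phi> p (hmeet B f g e) * pre e p"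
      by (simp only:) (simp add: ring_distribs)
  qed
  thus ?thesis unfolding S_def by (simp add: sum.distrib sum_subtractf)
qed

lemma S_absorb:
  assumes H: "H \<in> Min_i B i" and f: "f \<in> hcar B" "hle B f H"
  shows "S i (hmeet B f c0) = S i f"
  unfolding S_def
proof (intro sum.cong HOL.refl)
  interpret M: mphi A "\<mu> i" i \<Phi> by (rule mphi)
  fix e p assume e: "e \<in> E" and p: "p \<in> \<Phi>"
  have fe: "f e \<in> C" using f e by (auto simp: B_simps)
  have ce: "c0 e \<in> C" using c0_in e by (auto simp: B_simps)
  show "P i e * mu_a A (\<mu> i) \<Phi> p (hmeet B f c0 e) * pre e p = P i e * mu_a A (\<mu> i) \<Phi> p (f e) * pre e p"
  proof (cases "pre e p = 0")
    case False
    have "mu_a A (\<mu> i) \<Phi> p (mt (f e) (c0 e)) = mu_a A (\<mu> i) \<Phi> p (f e)"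
      using M.mua_absorb[OF p fe ce c0_ub[OF e p False]] .
    thus ?thesis using e by (simp add: B_simps)
  qed simp
qed

end


context setting begin

lemma ex_diff_p:
  assumes e: "e \<in> E" and C: "x \<in> C" "y \<in> C" and xy: "le x y" "x \<noteq> y" and yc: "le y (c0 e)"
  shows "\<exists>p\<in>\<Phi>. pre e p \<noteq> 0 \<and> mt x (fst p) \<noteq> mt y (fst p)"
proof (rule ccontr)
  assume "\<not> ?thesis"
  hence eq: "\<forall>p\<in>\<Phi>. pre e p \<noteq> 0 \<longrightarrow> mt x (fst p) = mt y (fst p)" by blast
  have ce: "c0 e \<in> C" using c0_in e by (auto simp: B_simps)
  have "le (c0 e) (im y x)"
  proof (rule c0_lub[OF e])
    show "im y x \<in> C" using C by simp
    show "\<forall>p\<in>\<Phi>. pre e p \<noteq> 0 \<longrightarrow> le (fst p) (im y x)"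
    proof (intro ballI impI)
      fix p assume p: "p \<in> \<Phi>" "pre e p \<noteq> 0"
      have pC: "fst p \<in> C" using PhiC p by simp
      have "mt (fst p) y = mt x (fst p)" using eq p meet_comm pC C by simp
      hence "le (mt (fst p) y) x" using pC C by simp
      thus "le (fst p) (im y x)" using le_imp_iff pC C by simp
    qed
  qed
  hence "le y (im y x)" using trans[OF yc] ce C by simp
  hence "le y x" using le_imp_iff C by simp
  thus False using xy antisym C by blast
qed

lemma S_strict:
  assumes H: "H \<in> Min_i B i" and f: "f \<in> hcar B" and g: "g \<in> hcar B" "hle B g H" "hle B g c0"
    and fg: "hle B f g" "f \<noteq> g"
  shows "S i f < S i g"
proof -
  interpret M: mphi A "\<mu> i" i \<Phi> by (rule mphi)
  have fP: "f \<in> PiE E (\<lambda>_. C)" and gP: "g \<in> PiE E (\<lambda>_. C)" using f g by (simp_all add: B_simps)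
  obtain e where e: "e \<in> E" "f e \<noteq> g e"
  proof (rule ccontr)
    assume "\<not> thesis"
    hence "\<forall>e\<in>E. f e = g e" using that by blast
    hence "f = g" using fP gP by (intro PiE_ext[of f E "\<lambda>_. C" g]) auto
    thus False using fg by simp
  qed
  have fe: "f e \<in> C" "g e \<in> C" "le (f e) (g e)" "le (g e) (c0 e)"
    using fP gP fg g e by (auto simp: B_simps)
  obtain t where t: "t \<in> Min_i A i" "g e \<in> C" "le (g e) t" using bnd[OF H g(1,2) e(1)] by blast
  define Pe where "Pe = {p\<in>\<Phi>. pre e p \<noteq> 0 \<and> mt (f e) (fst p) \<noteq> mt (g e) (fst p)}"
  obtain p0 where p0: "p0 \<in> Pe" using ex_diff_p[OF e(1) fe(1,2) fe(3) e(2) fe(4)] unfolding Pe_def by blast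
  define m where "m p = card {r\<in>\<Phi>. phi_less A r p}" for p
  obtain p where p: "p \<in> Pe" "\<forall>q. q \<in> Pe \<longrightarrow> m p \<le> m q"
    using ex_has_least_nat[of "\<lambda>p. p \<in> Pe" p0 m] p0 by blast
  have pP: "p \<in> \<Phi>" "pre e p \<noteq> 0" "mt (f e) (fst p) \<noteq> mt (g e) (fst p)" using p(1) unfolding Pe_def by auto
  have mbq: "\<forall>q\<in>mb A \<Phi> p. mt (f e) (fst q) = mt (g e) (fst q)"
  proof (intro ballI, rule ccontr)
    fix q assume q: "q \<in> mb A \<Phi> p" "mt (f e) (fst q) \<noteq> mt (g e) (fst q)"
    have qP: "q \<in> \<Phi>" "phi_less A q p" using q M.mb_sub M.mb_less by blast+
    have "pre e q \<noteq> 0" using pre_zero[OF qP(1) pP(1) qP(2) e(1)] pP(2) by blast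
    hence "q \<in> Pe" unfolding Pe_def using qP q by simp
    hence "m p \<le> m q" using p by blast
    moreover have "m q < m p"
    proof -
      have "{r\<in>\<Phi>. phi_less A r q} \<subset> {r\<in>\<Phi>. phi_less A r p}"
      proof
        show "{r\<in>\<Phi>. phi_less A r q} \<subseteq> {r\<in>\<Phi>. phi_less A r p}"
          using M.phi_less_trans qP pP by blast
        show "{r\<in>\<Phi>. phi_less A r q} \<noteq> {r\<in>\<Phi>. phi_less A r p}"
          using qP M.phi_less_irrefl by blast
      qed
      thus ?thesis unfolding m_def using finPhi by (simp add: psubset_card_mono)
    qed
    ultimately show False by simp
  qed
  have strict: "mu_a A (\<mu> i) \<Phi> p (f e) < mu_a A (\<mu> i) \<Phi> p (g e)"
    using M.mua_strict[OF t(1) pP(1) fe(1) fe(2) fe(3) t(3) mbq pP(3)] .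
  have Pp: "0 < P i e" using P_pos e by simp
  have prep: "0 < pre e p" using pre_nonneg[OF pP(1) e(1)] pP(2) by simp
  have termle: "\<And>e p. e \<in> E \<Longrightarrow> p \<in> \<Phi> \<Longrightarrow>
      P i e * mu_a A (\<mu> i) \<Phi> p (f e) * pre e p \<le> P i e * mu_a A (\<mu> i) \<Phi> p (g e) * pre e p"
  proof -
    fix e p assume e: "e \<in> E" and p: "p \<in> \<Phi>"
    obtain t where t: "t \<in> Min_i A i" "g e \<in> C" "le (g e) t" using bnd[OF H g(1,2) e] by blast
    have fe: "f e \<in> C" "le (f e) (g e)" using fP fg e by (auto simp: B_simps)
    have "mu_a A (\<mu> i) \<Phi> p (f e) \<le> mu_a A (\<mu> i) \<Phi> p (g e)"
      using M.mua_mono[OF t(1) p fe(1) t(2) fe(2) t(3)] .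
    thus "P i e * mu_a A (\<mu> i) \<Phi> p (f e) * pre e p \<le> P i e * mu_a A (\<mu> i) \<Phi> p (g e) * pre e p"
      using P_pos[OF e, of i] pre_nonneg[OF p e] by (simp add: mult_left_mono mult_right_mono)
  qed
  have inner: "(\<Sum>p\<in>\<Phi>. P i e * mu_a A (\<mu> i) \<Phi> p (f e) * pre e p) < (\<Sum>p\<in>\<Phi>. P i e * mu_a A (\<mu> i) \<Phi> p (g e) * pre e p)"
  proof (rule sum_strict_mono_ex1[OF finPhi])
    show "\<forall>x\<in>\<Phi>. P i e * mu_a A (\<mu> i) \<Phi> x (f e) * pre e x \<le> P i e * mu_a A (\<mu> i) \<Phi> x (g e) * pre e x"
      using termle e by blast
    have "P i e * mu_a A (\<mu> i) \<Phi> p (f e) < P i e * mu_a A (\<mu> i) \<Phi> p (g e)" using strict Pp by (rule mult_strict_left_mono)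
    hence "P i e * mu_a A (\<mu> i) \<Phi> p (f e) * pre e p < P i e * mu_a A (\<mu> i) \<Phi> p (g e) * pre e p"
      using prep by (rule mult_strict_right_mono)
    thus "\<exists>x\<in>\<Phi>. P i e * mu_a A (\<mu> i) \<Phi> x (f e) * pre e x < P i e * mu_a A (\<mu> i) \<Phi> x (g e) * pre e x"
      using pP by blast
  qed
  show ?thesis unfolding S_def
  proof (rule sum_strict_mono_ex1[OF finE])
    show "\<forall>x\<in>E. (\<Sum>p\<in>\<Phi>. P i x * mu_a A (\<mu> i) \<Phi> p (f x) * pre x p) \<le> (\<Sum>p\<in>\<Phi>. P i x * mu_a A (\<mu> i) \<Phi> p (g x) * pre x p)"
      using termle by (simp add: sum_mono)
    show "\<exists>x\<in>E. (\<Sum>p\<in>\<Phi>. P i x * mu_a A (\<mu> i) \<Phi> p (f x) * pre x p) < (\<Sum>p\<in>\<Phi>. P i x * mu_a A (\<mu> i) \<Phi> p (g x) * pre x p)"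
      using inner e by blast
  qed
qed

end


sublocale setting \<subseteq> QE: eha "pquot (inter_alg A E sim) (prebar A E \<Phi> pre)"
  unfolding eha_def mha_def ha_def eha_axioms_def mha_axioms_def using Q.HQ Q.MQ Q.EQ by blast

context setting begin

abbreviation "AE \<equiv> pquot B c0"

definition val :: "'i \<Rightarrow> ('e \<Rightarrow> 'a) set \<Rightarrow> real" where "val i X = S i (Q.v X)"

lemma lift:
  assumes F: "F \<in> Min_i AE i"
  shows "\<exists>H\<in>Min_i B i. \<forall>X\<in>hcar AE. hle AE X F \<longrightarrow> Q.v X \<in> Min_down B i \<and> hle B (Q.v X) H"
proof -
  obtain H where H: "H \<in> Min_i B i" "Q.v F = hmeet B H c0" using Q.Min_Q_lift[OF F] by blast
  have HC: "H \<in> hcar B" using H(1) unfolding Min_i_def i_minimal_def by blast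
  have FC: "F \<in> hcar AE" using F unfolding Min_i_def i_minimal_def by blast
  have vFH: "hle B (Q.v F) H" using H(2) HC c0_in Q.meet_le1 by simp
  show ?thesis
  proof (intro bexI[OF _ H(1)] ballI impI)
    fix X assume X: "X \<in> hcar AE" "hle AE X F"
    have "hle B (Q.v X) (Q.v F)" using X(2) Q.leQ by simp
    hence "hle B (Q.v X) H" using Q.trans[OF _ vFH] X(1) FC HC by simp
    moreover have "Q.v X \<in> hcar B" using X(1) by simp
    ultimately show "Q.v X \<in> Min_down B i \<and> hle B (Q.v X) H" unfolding Min_down_def using H(1) by blast
  qed
qed

lemma S_rep:
  assumes X: "X \<in> hcar AE" and g: "g \<in> X" "g \<in> Min_down B i"
  shows "S i g = val i X"
proof -
  have x: "X = Q.cls (pq_rep X)" "pq_rep X \<in> hcar B" using Q.inQ[OF X] by auto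
  have "g \<in> Q.cls (pq_rep X)" using g x by simp
  hence gC: "g \<in> hcar B" "hmeet B g c0 = hmeet B (pq_rep X) c0" unfolding pq_cls_def by auto
  obtain H where H: "H \<in> Min_i B i" "hle B g H" using g(2) unfolding Min_down_def by blast
  have "S i g = S i (hmeet B g c0)" using S_absorb[OF H(1) gC(1) H(2)] by simp
  also have "\<dots> = S i (Q.v X)" using gC(2) unfolding Q.v_def by simp
  finally show ?thesis unfolding val_def .
qed

lemma dom_m': "dom (mu_inter A \<mu> E sim P \<Phi> pre i) = Min_down B i"
  unfolding mu_inter_eq dom_def by auto

lemma upd_mu_val:
  assumes F: "F \<in> Min_i AE i" and X: "X \<in> hcar AE" "hle AE X F"
  shows "upd_mu A \<mu> E sim P \<Phi> pre i X = Some (val i X / val i F)"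
proof -
  obtain H where H: "H \<in> Min_i B i" "\<forall>X\<in>hcar AE. hle AE X F \<longrightarrow> Q.v X \<in> Min_down B i \<and> hle B (Q.v X) H"
    using lift[OF F] by blast
  have FC: "F \<in> hcar AE" using F unfolding Min_i_def i_minimal_def by blast
  have XMD: "X \<in> Min_down AE i" unfolding Min_down_def using X F by blast
  let ?m' = "mu_inter A \<mu> E sim P \<Phi> pre i"
  show ?thesis
  proof (cases "X = hbot AE")
    case True
    have "val i X = 0" unfolding val_def True using S_bot[OF H(1)] by simp
    thus ?thesis unfolding upd_mu_def upd_alg_def Let_def using XMD True by simp
  next
    case False
    have the: "(THE F'. F' \<in> Min_i AE i \<and> hle AE X F') = F"
    proof (rule the_equality)
      show "F \<in> Min_i AE i \<and> hle AE X F" using F X by simp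
      fix F' assume F': "F' \<in> Min_i AE i \<and> hle AE X F'"
      show "F' = F" using QE.Min_unique[of F' i F X] F' F X False by blast
    qed
    have ex: "\<And>Y. Y \<in> hcar AE \<Longrightarrow> hle AE Y F \<Longrightarrow> \<exists>g. g \<in> Y \<and> g \<in> dom ?m'"
      using H(2) Q.v_mem dom_m' by blast
    have sX: "(SOME g. g \<in> X \<and> g \<in> dom ?m') \<in> X \<and> (SOME g. g \<in> X \<and> g \<in> dom ?m') \<in> dom ?m'"
      using someI_ex[OF ex[OF X]] .
    have sF: "(SOME g. g \<in> F \<and> g \<in> dom ?m') \<in> F \<and> (SOME g. g \<in> F \<and> g \<in> dom ?m') \<in> dom ?m'"
      using someI_ex[OF ex[OF FC QE.refl[OF FC]]] .
    have v1: "the (?m' (SOME g. g \<in> X \<and> g \<in> dom ?m')) = val i X"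
      using sX S_rep[OF X(1)] dom_m' mu_inter_eq by auto
    have v2: "the (?m' (SOME g. g \<in> F \<and> g \<in> dom ?m')) = val i F"
      using sF S_rep[OF FC] dom_m' mu_inter_eq by auto
    show ?thesis unfolding upd_mu_def upd_alg_def Let_def using XMD False the v1 v2 by simp
  qed
qed

end


context setting begin

lemma val_props:
  assumes F: "F \<in> Min_i AE i"
  shows "\<And>X Y. X \<in> hcar AE \<Longrightarrow> Y \<in> hcar AE \<Longrightarrow> hle AE X Y \<Longrightarrow> hle AE Y F \<Longrightarrow> val i X \<le> val i Y"
    and "\<And>X Y. X \<in> hcar AE \<Longrightarrow> Y \<in> hcar AE \<Longrightarrow> hlt AE X Y \<Longrightarrow> hle AE Y F \<Longrightarrow> val i X < val i Y"
    and "\<And>X Y. X \<in> hcar AE \<Longrightarrow> Y \<in> hcar AE \<Longrightarrow> hle AE X F \<Longrightarrow> hle AE Y F \<Longrightarrow>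
           val i (hjoin AE X Y) = val i X + val i Y - val i (hmeet AE X Y)"
    and "val i (hbot AE) = 0"
    and "0 < val i F"
proof -
  obtain H where H: "H \<in> Min_i B i" "\<forall>X\<in>hcar AE. hle AE X F \<longrightarrow> Q.v X \<in> Min_down B i \<and> hle B (Q.v X) H"
    using lift[OF F] by blast
  have FC: "F \<in> hcar AE" "F \<noteq> hbot AE" using F unfolding Min_i_def i_minimal_def by blast+
  show vm: "\<And>X Y. X \<in> hcar AE \<Longrightarrow> Y \<in> hcar AE \<Longrightarrow> hle AE X Y \<Longrightarrow> hle AE Y F \<Longrightarrow> val i X \<le> val i Y"
  proof -
    fix X Y assume a: "X \<in> hcar AE" "Y \<in> hcar AE" "hle AE X Y" "hle AE Y F"
    show "val i X \<le> val i Y" unfolding val_def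
      using S_mono[OF H(1), of "Q.v X" "Q.v Y"] H(2) a Q.leQ by simp
  qed
  show vs: "\<And>X Y. X \<in> hcar AE \<Longrightarrow> Y \<in> hcar AE \<Longrightarrow> hlt AE X Y \<Longrightarrow> hle AE Y F \<Longrightarrow> val i X < val i Y"
  proof -
    fix X Y assume a: "X \<in> hcar AE" "Y \<in> hcar AE" "hlt AE X Y" "hle AE Y F"
    have ne: "Q.v X \<noteq> Q.v Y" using a(3) Q.eqQ[OF a(1,2)] unfolding hlt_def by simp
    have le: "hle B (Q.v X) (Q.v Y)" using a(3) Q.leQ unfolding hlt_def by simp
    show "val i X < val i Y" unfolding val_def
      using S_strict[OF H(1), of "Q.v X" "Q.v Y"] H(2) a ne le Q.v_le_c by simp
  qed
  show "\<And>X Y. X \<in> hcar AE \<Longrightarrow> Y \<in> hcar AE \<Longrightarrow> hle AE X F \<Longrightarrow> hle AE Y F \<Longrightarrow>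
           val i (hjoin AE X Y) = val i X + val i Y - val i (hmeet AE X Y)"
  proof -
    fix X Y assume a: "X \<in> hcar AE" "Y \<in> hcar AE" "hle AE X F" "hle AE Y F"
    show "val i (hjoin AE X Y) = val i X + val i Y - val i (hmeet AE X Y)" unfolding val_def
      using S_modular[OF H(1), of "Q.v X" "Q.v Y"] H(2) a by simp
  qed
  show vb: "val i (hbot AE) = 0" unfolding val_def using S_bot[OF H(1)] by simp
  have "hlt AE (hbot AE) F" unfolding hlt_def using FC by simp
  hence "val i (hbot AE) < val i F" using vs[of "hbot AE" F] FC by simp
  thus "0 < val i F" using vb by simp
qed

lemma MD_AE: "X \<in> Min_down AE i \<Longrightarrow> \<exists>F\<in>Min_i AE i. X \<in> hcar AE \<and> hle AE X F"
  unfolding Min_down_def by blast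

lemma MinAE_C: "F \<in> Min_i AE i \<Longrightarrow> F \<in> hcar AE"
  unfolding Min_i_def i_minimal_def by blast

lemma upd_measure: "i_measure AE i (upd_mu A \<mu> E sim P \<Phi> pre i)"
proof -
  let ?u = "upd_mu A \<mu> E sim P \<Phi> pre i"
  have none: "\<And>X. X \<notin> Min_down AE i \<Longrightarrow> ?u X = None"
    unfolding upd_mu_def upd_alg_def Let_def by simp
  have some: "\<And>X F. F \<in> Min_i AE i \<Longrightarrow> X \<in> hcar AE \<Longrightarrow> hle AE X F \<Longrightarrow> ?u X = Some (val i X / val i F)"
    using upd_mu_val by blast
  have MDI: "\<And>X F. F \<in> Min_i AE i \<Longrightarrow> X \<in> hcar AE \<Longrightarrow> hle AE X F \<Longrightarrow> X \<in> Min_down AE i"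
    unfolding Min_down_def by blast
  have dom: "dom ?u = Min_down AE i"
  proof
    show "dom ?u \<subseteq> Min_down AE i"
    proof
      fix X assume X: "X \<in> dom ?u"
      show "X \<in> Min_down AE i"
      proof (rule ccontr)
        assume "X \<notin> Min_down AE i"
        hence "?u X = None" by (rule none)
        thus False using X by (simp add: domIff)
      qed
    qed
    show "Min_down AE i \<subseteq> dom ?u"
    proof
      fix X assume "X \<in> Min_down AE i"
      then obtain F where F: "F \<in> Min_i AE i" "X \<in> hcar AE" "hle AE X F" using MD_AE by blast
      have "?u X = Some (val i X / val i F)" by (rule some[OF F])
      thus "X \<in> dom ?u" by (simp add: domIff)
    qed
  qed
  show ?thesis
    unfolding i_measure_def i_premeasure_def
  proof (intro conjI ballI impI)
    show "dom ?u = Min_down AE i" by (rule dom)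
  next
    fix X assume "X \<in> dom ?u"
    then obtain F where F: "F \<in> Min_i AE i" "X \<in> hcar AE" "hle AE X F" using dom MD_AE by blast
    have "val i (hbot AE) \<le> val i X" using val_props(1)[OF F(1)] F by simp
    hence "0 \<le> val i X / val i F" using val_props(4,5)[OF F(1)] by simp
    thus "0 \<le> the (?u X)" using some[OF F] by simp
  next
    fix X Y assume "X \<in> dom ?u" "Y \<in> dom ?u" and XY: "hle AE X Y"
    then obtain F where F: "F \<in> Min_i AE i" "Y \<in> hcar AE" "hle AE Y F"
      and XC: "X \<in> hcar AE" using dom MD_AE by blast
    have XF: "hle AE X F" using QE.trans[OF XY F(3) XC F(2) MinAE_C[OF F(1)]] .
    have "val i X \<le> val i Y" using val_props(1)[OF F(1) XC F(2) XY F(3)] .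
    hence "val i X / val i F \<le> val i Y / val i F" using val_props(5)[OF F(1)] by (simp add: divide_right_mono)
    thus "the (?u X) \<le> the (?u Y)" using some[OF F(1) XC XF] some[OF F] by simp
  next
    fix a b c assume a: "a \<in> Min_i AE i" and b: "b \<in> hcar AE" and c: "c \<in> hcar AE" and bc: "hle AE b a \<and> hle AE c a"
    have aC: "a \<in> hcar AE" using MinAE_C[OF a] .
    have j: "hle AE (hjoin AE b c) a" "hle AE (hmeet AE b c) a" using bc b c aC QE.meet_le1I by auto
    have jC: "hjoin AE b c \<in> hcar AE" "hmeet AE b c \<in> hcar AE" using b c by simp_all
    have "val i (hjoin AE b c) = val i b + val i c - val i (hmeet AE b c)"
      using val_props(3)[OF a b c] bc by simp
    hence "val i (hjoin AE b c) / val i a = val i b / val i a + val i c / val i a - val i (hmeet AE b c) / val i a"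
      by (simp add: add_divide_distrib diff_divide_distrib)
    thus "the (?u (hjoin AE b c)) = the (?u b) + the (?u c) - the (?u (hmeet AE b c))"
      using some[OF a jC(1) j(1)] some[OF a jC(2) j(2)] some[OF a b] some[OF a c] bc by simp
  next
    assume "dom ?u \<noteq> {}"
    then obtain X where "X \<in> Min_down AE i" using dom by blast
    then obtain F where F: "F \<in> Min_i AE i" using MD_AE by blast
    have "?u (hbot AE) = Some (val i (hbot AE) / val i F)"
      using some[OF F] MinAE_C[OF F] by simp
    thus "?u (hbot AE) = Some 0" using val_props(4)[OF F] by simp
  next
    fix a b c assume a: "a \<in> Min_i AE i" and b: "b \<in> hcar AE" and c: "c \<in> hcar AE"
      and bc: "hlt AE b c \<and> hle AE c a"
    have aC: "a \<in> hcar AE" using MinAE_C[OF a] .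
    have ba: "hle AE b a" using QE.trans[of b c a] bc b c aC unfolding hlt_def by blast
    have "val i b < val i c" using val_props(2)[OF a b c] bc by simp
    hence "val i b / val i a < val i c / val i a" using val_props(5)[OF a] by (simp add: divide_strict_right_mono)
    thus "the (?u b) < the (?u c)" using some[OF a b ba] some[OF a c] bc by simp
  next
    fix a assume a: "a \<in> Min_i AE i"
    have "?u a = Some (val i a / val i a)" using some[OF a MinAE_C[OF a]] MinAE_C[OF a] by simp
    thus "?u a = Some 1" using val_props(5)[OF a] by simp
  qed
qed

lemma final: "APE_structure (upd_alg A E sim \<Phi> pre) (upd_mu A \<mu> E sim P \<Phi> pre)"
  unfolding APE_structure_def upd_alg_def using Q.EQ upd_measure by blast

end

theorem proposition10:
  fixes A :: "('a, 'i) mha" and \<mu> :: "'i \<Rightarrow> 'a \<Rightarrow> real option"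
    and E :: "'e set" and sim :: "'i \<Rightarrow> 'e \<Rightarrow> 'e \<Rightarrow> bool" and P :: "'i \<Rightarrow> 'e \<Rightarrow> real"
    and \<Phi> :: "('a \<times> nat) set" and pre :: "'e \<Rightarrow> ('a \<times> nat) \<Rightarrow> real"
  assumes "APE_structure A \<mu>"
    and "prob_event_structure A E sim P \<Phi> pre"
  shows "APE_structure (upd_alg A E sim \<Phi> pre) (upd_mu A \<mu> E sim P \<Phi> pre)"
proof -
  interpret setting A \<mu> E sim P \<Phi> pre using assms by (unfold_locales)
  show ?thesis by (rule final)
qed

end
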